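(* Let $p$ be a prime, $e,r\ge2$ and $c,d\ge1$ integers with $d\mid e-1$, and let $R$ be a ring of characteristic $p^{r+1}$. Let $\mathbb S=R[x][y;\alpha]$ with $\alpha$ the $R$-ring automorphism of $R[x]$ given by $\alpha(x)=x+px^e$ (so $yx=(x+px^e)y$). Define $\Sigma_m=\frac{e^m-1}{e-1}$ for $m\in\mathbb N$, let $\mu\ge1$ be the integer with $c\Sigma_{\mu-1}\le r<c\Sigma_\mu$, and set $\overline\Sigma_m=c\Sigma_m$ for $0\le m\le\mu$ and $\overline\Sigma_{\mu+s}=c(s+\Sigma_\mu)+sr(e-1)$ for $s\in\mathbb N$. Let $$\widetilde{\mathcal T}=\{x^ny^m: m,n\in\mathbb N,\ n-cm\in d\mathbb Z\},\qquad \mathcal T=\{x^ny^m: m,n\in\mathbb N,\ n-cm\in d\mathbb N,\ n\le\overline\Sigma_m\},$$ and let $A=\bigoplus_{\tau\in\mathcal T}R\tau$ and $\widetilde A=\bigoplus_{\tau\in\widetilde{\mathcal T}}R\tau$. Then $A$ and $\widetilde A$ are subrings of $\mathbb S$; $A$ is a strongly nicely essential subring of $\widetilde A$; and $\widetilde A$ is a special subextension of $\mathbb S$ regarded as the univariate Ore extension $R[x][y;\alpha]$ over $R[x]$ (with, for each $m$, attached data $\lambda_m=x^{cm}y^m$, $B_m=R[x^d]$ and $\alpha_{(m)}$ the restriction of $\alpha^m$ to $R[x^d]$).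
   Context: $\mathbb S$ is free as a left $R$-module on $\{x^ny^m:m,n\in\mathbb N\}$. A subring $A$ of a ring $B$ is nicely essential if for every finite set $E\subseteq B$ of non-zero elements there is $a\in A$ with $0\ne ax\in A$ for all $x\in E$; strongly nicely essential if moreover for every $z\in B$ there is $c\in A$ with $\{a\in A:ac=0\}=0$ and $cz\in A$. For $S=R[x]$ (free over $R$) and the Ore extension $S[y;\alpha]$: for a subring $A'\supseteq R$, $\operatorname{Deg}_y(A')=\{\deg_yf:0\ne f\in A'\}$, $d_{A'}=\gcd(\operatorname{Deg}_y(A')\setminus\{0\})$ if $A'\not\subseteq S$, else $0$; $A'$ is a special subextension if $A'=\sum_m(A'\cap Sy^m)$, $\operatorname{Deg}_y(A')=d_{A'}\mathbb N$, and for each $0\ne m\in\operatorname{Deg}_y(A')$ there exist $\lambda_m=\upsilon_my^m\in A'$ with $\upsilon_m$ regular in $S$, a subring $B_m$ with $R\subseteq B_m\subseteq A'\cap S$ and an automorphism $\alpha_{(m)}$ of $B_m$ such that $\deg_y(\lambda_mq-\alpha_{(m)}(q)\lambda_m)<m$ for all $q\in B_m$, and for every $q\in S$ with $qy^m\in A'$ some $u\in B_m$ regular in $S$ with $uqy^m\in B_m\lambda_m$. *)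

theory Defs
  imports Main "HOL-Computational_Algebra.Primes"
begin

text \<open>The Ore extension S = R[x][y;alpha] is presented abstractly: an ambient unital
ring of type 'a, a unital subring R, and elements x, y such that R commutes with x and y,
y x = (x + p x^e) y, and S is free as a left R-module on the monomials x^n y^m.\<close>

definition is_subring :: "'a::ring_1 set \<Rightarrow> bool" where
  "is_subring A \<longleftrightarrow> 0 \<in> A \<and> 1 \<in> A \<and> (\<forall>a\<in>A. \<forall>b\<in>A. a + b \<in> A \<and> a - b \<in> A \<and> a * b \<in> A)"

definition rep :: "'a::ring_1 set \<Rightarrow> 'a \<Rightarrow> 'a \<Rightarrow> (nat \<Rightarrow> nat \<Rightarrow> 'a) \<Rightarrow> 'a \<Rightarrow> bool" where
  "rep R x y c s \<longleftrightarrow> (\<forall>n m. c n m \<in> R) \<and> finite {(n, m). c n m \<noteq> 0} \<and>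
     s = (\<Sum>(n, m)\<in>{(n, m). c n m \<noteq> 0}. c n m * x ^ n * y ^ m)"

definition ore_setup :: "'a::ring_1 set \<Rightarrow> 'a \<Rightarrow> 'a \<Rightarrow> nat \<Rightarrow> nat \<Rightarrow> bool" where
  "ore_setup R x y p e \<longleftrightarrow> is_subring R \<and> (\<forall>a\<in>R. a * x = x * a \<and> a * y = y * a) \<and>
     y * x = (x + of_nat p * x ^ e) * y \<and> (\<forall>s. \<exists>!c. rep R x y c s)"

definition coef :: "'a::ring_1 set \<Rightarrow> 'a \<Rightarrow> 'a \<Rightarrow> 'a \<Rightarrow> nat \<Rightarrow> nat \<Rightarrow> 'a" where
  "coef R x y s = (THE c. rep R x y c s)"

definition Rspan :: "'a::ring_1 set \<Rightarrow> 'a \<Rightarrow> 'a \<Rightarrow> (nat \<times> nat) set \<Rightarrow> 'a set" where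
  "Rspan R x y I = {s. \<exists>c. rep R x y c s \<and> (\<forall>n m. c n m \<noteq> 0 \<longrightarrow> (n, m) \<in> I)}"

definition Rx :: "'a::ring_1 set \<Rightarrow> 'a \<Rightarrow> 'a \<Rightarrow> 'a set" where
  "Rx R x y = Rspan R x y {(n, m). m = 0}"

definition alpha :: "'a::ring_1 set \<Rightarrow> 'a \<Rightarrow> 'a \<Rightarrow> nat \<Rightarrow> nat \<Rightarrow> 'a \<Rightarrow> 'a" where
  "alpha R x y p e s = (\<Sum>n\<in>{n. coef R x y s n 0 \<noteq> 0}. coef R x y s n 0 * (x + of_nat p * x ^ e) ^ n)"

definition nicely_essential :: "'a::ring_1 set \<Rightarrow> 'a set \<Rightarrow> bool" where
  "nicely_essential A B \<longleftrightarrow>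
     (\<forall>E. finite E \<longrightarrow> E \<subseteq> B - {0} \<longrightarrow> (\<exists>a\<in>A. \<forall>z\<in>E. a * z \<noteq> 0 \<and> a * z \<in> A))"

definition strongly_nicely_essential :: "'a::ring_1 set \<Rightarrow> 'a set \<Rightarrow> bool" where
  "strongly_nicely_essential A B \<longleftrightarrow> nicely_essential A B \<and>
     (\<forall>z\<in>B. \<exists>c\<in>A. {a\<in>A. a * c = 0} = {0} \<and> c * z \<in> A)"

text \<open>y-degree (for nonzero elements): largest m with a nonzero coefficient of some x^n y^m\<close>
definition deg_y :: "'a::ring_1 set \<Rightarrow> 'a \<Rightarrow> 'a \<Rightarrow> 'a \<Rightarrow> nat" where
  "deg_y R x y f = Max {m. \<exists>n. coef R x y f n m \<noteq> 0}"

definition Deg_y :: "'a::ring_1 set \<Rightarrow> 'a \<Rightarrow> 'a \<Rightarrow> 'a set \<Rightarrow> nat set" where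
  "Deg_y R x y A' = {deg_y R x y f | f. f \<in> A' \<and> f \<noteq> 0}"

definition d_of :: "'a::ring_1 set \<Rightarrow> 'a \<Rightarrow> 'a \<Rightarrow> 'a set \<Rightarrow> nat" where
  "d_of R x y A' = (if A' \<subseteq> Rx R x y then 0 else Gcd (Deg_y R x y A' - {0}))"

definition regular_in :: "'a::ring_1 set \<Rightarrow> 'a \<Rightarrow> bool" where
  "regular_in S u \<longleftrightarrow> u \<in> S \<and> (\<forall>s\<in>S. (u * s = 0 \<longrightarrow> s = 0) \<and> (s * u = 0 \<longrightarrow> s = 0))"

definition ring_aut :: "'a::ring_1 set \<Rightarrow> ('a \<Rightarrow> 'a) \<Rightarrow> bool" where
  "ring_aut B f \<longleftrightarrow> bij_betw f B B \<and> f 1 = 1 \<and>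
     (\<forall>a\<in>B. \<forall>b\<in>B. f (a + b) = f a + f b \<and> f (a * b) = f a * f b)"

text \<open>special subextension with explicitly given data: lambda_m = ups m * y^m, B m, al m\<close>
definition special_with :: "'a::ring_1 set \<Rightarrow> 'a \<Rightarrow> 'a \<Rightarrow> 'a set \<Rightarrow>
    (nat \<Rightarrow> 'a) \<Rightarrow> (nat \<Rightarrow> 'a set) \<Rightarrow> (nat \<Rightarrow> 'a \<Rightarrow> 'a) \<Rightarrow> bool" where
  "special_with R x y A' ups B al \<longleftrightarrow>
     is_subring A' \<and> R \<subseteq> A' \<and>
     A' = {\<Sum>m\<in>F. g m | F g. finite F \<and> (\<forall>m\<in>F. g m \<in> A' \<and> (\<exists>q\<in>Rx R x y. g m = q * y ^ m))} \<and>
     Deg_y R x y A' = {d_of R x y A' * k | k. True} \<and>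
     (\<forall>m\<in>Deg_y R x y A'. m \<noteq> 0 \<longrightarrow>
        ups m * y ^ m \<in> A' \<and> regular_in (Rx R x y) (ups m) \<and>
        is_subring (B m) \<and> R \<subseteq> B m \<and> B m \<subseteq> A' \<inter> Rx R x y \<and> ring_aut (B m) (al m) \<and>
        (\<forall>q\<in>B m. let f = ups m * y ^ m * q - al m q * (ups m * y ^ m)
                  in f = 0 \<or> deg_y R x y f < m) \<and>
        (\<forall>q\<in>Rx R x y. q * y ^ m \<in> A' \<longrightarrow>
           (\<exists>u\<in>B m. regular_in (Rx R x y) u \<and>
              u * q * y ^ m \<in> {b * (ups m * y ^ m) | b. b \<in> B m})))"

definition special_subext :: "'a::ring_1 set \<Rightarrow> 'a \<Rightarrow> 'a \<Rightarrow> 'a set \<Rightarrow> bool" where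
  "special_subext R x y A' \<longleftrightarrow> (\<exists>ups B al. special_with R x y A' ups B al)"

definition Sig :: "nat \<Rightarrow> nat \<Rightarrow> nat" where
  "Sig e m = (\<Sum>i<m. e ^ i)"   \<comment> \<open>= (e^m - 1)/(e - 1)\<close>

definition mu :: "nat \<Rightarrow> nat \<Rightarrow> nat \<Rightarrow> nat" where
  "mu c e r = (THE \<mu>. 1 \<le> \<mu> \<and> c * Sig e (\<mu> - 1) \<le> r \<and> r < c * Sig e \<mu>)"

definition Sigbar :: "nat \<Rightarrow> nat \<Rightarrow> nat \<Rightarrow> nat \<Rightarrow> nat" where
  "Sigbar c e r m = (let \<mu> = mu c e r in
     if m \<le> \<mu> then c * Sig e m
     else c * ((m - \<mu>) + Sig e \<mu>) + (m - \<mu>) * r * (e - 1))"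

definition Tset :: "nat \<Rightarrow> nat \<Rightarrow> nat \<Rightarrow> nat \<Rightarrow> (nat \<times> nat) set" where
  "Tset c d e r = {(n, m). c * m \<le> n \<and> d dvd (n - c * m) \<and> n \<le> Sigbar c e r m}"

definition Ttilde :: "nat \<Rightarrow> nat \<Rightarrow> (nat \<times> nat) set" where
  "Ttilde c d = {(n, m). int d dvd (int n - int c * int m)}"

end

theory Submission
  imports Defs
begin

lemma Sig_0[simp]: "Sig e 0 = 0" by (simp add: Sig_def)
lemma Sig_Suc: "Sig e (Suc m) = Sig e m + e^m" by (simp add: Sig_def)
lemma Sig_Suc': "Sig e (Suc m) = 1 + e * Sig e m"
  unfolding Sig_def by (subst sum.lessThan_Suc_shift) (simp add: sum_distrib_left)
lemma Sig_add: "Sig e (b+m) = Sig e b + e^b * Sig e m"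
  by (induction m) (auto simp: Sig_Suc algebra_simps power_add)
lemma pow_Sig: "e \<ge> 1 \<Longrightarrow> e^b = 1 + (e-1) * Sig e b"
proof (induction b)
  case (Suc b)
  obtain f where f: "e = Suc f" using Suc.prems by (cases e) auto
  have "e ^ Suc b = e * e^b" by simp
  also have "\<dots> = 1 + (e-1) * Sig e (Suc b)" using Suc unfolding f Sig_Suc'
    by (simp add: algebra_simps)
  finally show ?case .
qed simp
lemma Sig_mono: "b \<le> m \<Longrightarrow> Sig e b \<le> Sig e m"
  using Sig_add[of e b "m-b"] by simp
lemma Sig_ge: "e \<ge> 1 \<Longrightarrow> m \<le> Sig e m"
proof (induction m)
  case (Suc m)
  have "1 \<le> e^m" using Suc.prems by simp
  thus ?case using Suc.IH[OF Suc.prems] Sig_Suc[of e m] by linarith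
qed simp
lemma Sig_strict: "e \<ge> 1 \<Longrightarrow> b < m \<Longrightarrow> Sig e b < Sig e m"
proof -
  assume "e \<ge> 1" "b < m"
  then have "Sig e (Suc b) \<le> Sig e m" by (intro Sig_mono) simp
  moreover have "Sig e b < Sig e (Suc b)" using \<open>e \<ge> 1\<close> by (simp add: Sig_Suc)
  ultimately show ?thesis by simp
qed

lemma mu_props:
  assumes "c \<ge> 1" "e \<ge> 1"
  shows "1 \<le> mu c e r \<and> c * Sig e (mu c e r - 1) \<le> r \<and> r < c * Sig e (mu c e r)"
proof -
  define P where "P k \<longleftrightarrow> r < c * Sig e k" for k
  have ex: "P (Suc r)" unfolding P_def
    using Sig_ge[OF assms(2), of "Suc r"] assms(1)
    by (metis le_trans less_eq_Suc_le mult_le_mono1 mult_1)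
  define m where "m = (LEAST k. P k)"
  have Pm: "P m" unfolding m_def by (rule LeastI[of P, OF ex])
  have m1: "1 \<le> m" using Pm by (cases m) (auto simp: P_def)
  have "\<not> P (m - 1)" unfolding m_def using m1 not_less_Least[of "m-1" P] m_def by simp
  then have h: "1 \<le> m \<and> c * Sig e (m - 1) \<le> r \<and> r < c * Sig e m" using Pm m1 by (auto simp: P_def)
  have uniq: "k = m" if "1 \<le> k \<and> c * Sig e (k - 1) \<le> r \<and> r < c * Sig e k" for k
  proof (rule ccontr)
    assume "k \<noteq> m"
    then consider "k < m" | "m < k" by linarith
    then show False
    proof cases
      case 1
      then have "Sig e k \<le> Sig e (m-1)" by (intro Sig_mono) simp
      then show ?thesis using h that by (meson le_trans mult_le_mono2 not_le)
    next
      case 2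
      then have "Sig e m \<le> Sig e (k-1)" by (intro Sig_mono) simp
      then show ?thesis using h that by (meson le_trans mult_le_mono2 not_le)
    qed
  qed
  have "mu c e r = m" unfolding mu_def using h uniq by (rule the_equality)
  then show ?thesis using h by simp
qed

context
  fixes c e r :: nat
  assumes c1: "c \<ge> 1" and e2: "e \<ge> 2"
begin

lemma mup: "1 \<le> mu c e r" "c * Sig e (mu c e r - 1) \<le> r" "r < c * Sig e (mu c e r)"
  using mu_props[OF c1, of e r] e2 by auto

lemma Sb_le: "m \<le> mu c e r \<Longrightarrow> Sigbar c e r m = c * Sig e m"
  by (simp add: Sigbar_def Let_def)

lemma Sb_ge: "mu c e r \<le> m \<Longrightarrow>
   Sigbar c e r m = c * Sig e (mu c e r) + (m - mu c e r) * (c + r*(e-1))"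
proof (cases "m = mu c e r")
  case False
  assume "mu c e r \<le> m"
  then obtain t where t: "m = mu c e r + t" using le_Suc_ex by blast
  have h: "c*(t + S) + t*r*f = c*S + t*(c + r*f)" for S f :: nat by (simp add: algebra_simps)
  show ?thesis using False h[of "Sig e (mu c e r)" "e-1"] unfolding Sigbar_def Let_def t by simp
qed (simp add: Sigbar_def)

lemma Sb_0: "Sigbar c e r 0 = 0"
  by (simp add: Sb_le)

lemma step_le: "k < mu c e r \<Longrightarrow> c * e^k \<le> c + r*(e-1)"
proof -
  assume k: "k < mu c e r"
  have "Sig e k \<le> Sig e (mu c e r - 1)" using k by (intro Sig_mono) simp
  then have "c * Sig e k \<le> r" using mup(2) by (meson le_trans mult_le_mono2)
  then have "(e-1) * (c * Sig e k) \<le> (e-1) * r" by simp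
  moreover have "c * e^k = c + (e-1) * (c * Sig e k)"
    using pow_Sig[of e k] e2 by (simp add: algebra_simps)
  ultimately show ?thesis by (simp add: algebra_simps)
qed

lemma Sb_bound_le: "1 \<le> s \<Longrightarrow> s \<le> mu c e r \<Longrightarrow> c * Sig e s + r*(e-1) \<le> s * (c + r*(e-1))"
proof (induction s rule: dec_induct)
  case base
  then show ?case by (simp add: Sig_Suc)
next
  case (step s)
  have "c * e^s \<le> c + r*(e-1)" using step by (intro step_le) simp
  moreover have "c * Sig e (Suc s) = c * Sig e s + c * e^s" by (simp add: Sig_Suc algebra_simps)
  moreover have "Suc s * (c + r*(e-1)) = (c + r*(e-1)) + s * (c + r*(e-1))" by (simp only: mult_Suc)
  moreover have "c * Sig e s + r*(e-1) \<le> s * (c + r*(e-1))" using step by simp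
  ultimately show ?case by linarith
qed

lemma Sb_bound: "1 \<le> s \<Longrightarrow> Sigbar c e r s + r*(e-1) \<le> s * (c + r*(e-1))"
proof (cases "s \<le> mu c e r")
  case True
  assume "1 \<le> s" then show ?thesis using Sb_bound_le True Sb_le by simp
next
  case False
  have "c * Sig e (mu c e r) + r*(e-1) \<le> mu c e r * (c + r*(e-1))"
    using Sb_bound_le[of "mu c e r"] mup by simp
  moreover have "Sigbar c e r s = c * Sig e (mu c e r) + (s - mu c e r) * (c + r*(e-1))"
    using False by (intro Sb_ge) simp
  moreover have "mu c e r * (c + r*(e-1)) + (s - mu c e r) * (c + r*(e-1)) = s * (c + r*(e-1))"
    using False by (simp add: add_mult_distrib[symmetric])
  ultimately show ?thesis by linarith
qed

lemma main_ineq: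
  assumes "a \<le> Sigbar c e r b" "n \<le> Sigbar c e r m" "j \<le> n * Sig e b" "j \<le> r"
  shows "a + n + j*(e-1) \<le> Sigbar c e r (b+m)"
proof -
  let ?mu = "mu c e r" and ?L = "c + r*(e-1)"
  consider "b = 0" | "m = 0" | "b + m \<le> ?mu" | "b \<ge> 1" "m \<ge> 1" "b + m > ?mu" by linarith
  then show ?thesis
  proof cases
    case 1
    then show ?thesis using assms Sb_0 by simp
  next
    case 2
    then show ?thesis using assms Sb_0 by simp
  next
    case 3
    have sb: "Sigbar c e r b = c * Sig e b" "Sigbar c e r m = c * Sig e m"
      "Sigbar c e r (b+m) = c * Sig e (b+m)" using 3 by (auto intro!: Sb_le)
    have "j*(e-1) \<le> n * Sig e b * (e-1)" using assms(3) by simp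
    moreover have "n + n * Sig e b * (e-1) = n * e^b" using pow_Sig[of e b] e2
      by (simp add: algebra_simps)
    moreover have "n * e^b \<le> c * Sig e m * e^b" using assms(2) sb by simp
    moreover have "c * Sig e (b+m) = c * Sig e b + c * Sig e m * e^b"
      by (simp add: Sig_add algebra_simps)
    ultimately show ?thesis using assms(1) sb by linarith
  next
    case 4
    have key: "Sigbar c e r b + Sigbar c e r m + r*(e-1) \<le> Sigbar c e r (b+m)"
    proof -
      consider "m \<ge> ?mu" | "b \<ge> ?mu" | "b < ?mu" "m < ?mu" by linarith
      then show ?thesis
      proof cases
        case 1
        have "b+m-?mu = b + (m-?mu)" using 1 by simp
        then have "(b+m-?mu)*?L = b*?L + (m-?mu)*?L" by (simp only: add_mult_distrib)
        then have "Sigbar c e r (b+m) = Sigbar c e r m + b * ?L"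
          using Sb_ge[of m] Sb_ge[of "b+m"] 1 by simp
        then show ?thesis using Sb_bound[of b] 4 by simp
      next
        case 2
        have "b+m-?mu = m + (b-?mu)" using 2 by simp
        then have "(b+m-?mu)*?L = m*?L + (b-?mu)*?L" by (simp only: add_mult_distrib)
        then have "Sigbar c e r (b+m) = Sigbar c e r b + m * ?L"
          using Sb_ge[of b] Sb_ge[of "b+m"] 2 by simp
        then show ?thesis using Sb_bound[of m] 4 by simp
      next
        case 3
        have "Sig e b \<le> Sig e (?mu - 1)" "Sig e m \<le> Sig e (?mu - 1)" using 3 by (auto intro!: Sig_mono)
        then have "c * Sig e b + c * Sig e m \<le> c * (2 * Sig e (?mu - 1))" by (metis add_mono mult_2 distrib_left mult_le_mono2)
        moreover have "Sig e ?mu = 1 + e * Sig e (?mu - 1)" using mup(1) Sig_Suc'[of e "?mu - 1"] by simp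
        moreover have "2 * Sig e (?mu - 1) \<le> e * Sig e (?mu - 1)" using e2 by simp
        ultimately have "2 * Sig e (?mu - 1) \<le> Sig e ?mu" "c * Sig e b + c * Sig e m \<le> c * (2 * Sig e (?mu - 1))" by linarith+
        then have "c * Sig e b + c * Sig e m \<le> c * Sig e ?mu"
          using mult_le_mono2[of "2 * Sig e (?mu - 1)" "Sig e ?mu" c] by linarith
        moreover have "Sigbar c e r (b+m) = c * Sig e ?mu + (b + m - ?mu) * ?L" using 4 by (intro Sb_ge) simp
        moreover have "?L \<le> (b + m - ?mu) * ?L" 
        proof -
          have "1 \<le> b + m - ?mu" using 4 by simp
          then have "1 * ?L \<le> (b + m - ?mu) * ?L" by (rule mult_le_mono1)
          then show ?thesis by simp
        qed
        moreover have "Sigbar c e r b = c * Sig e b" "Sigbar c e r m = c * Sig e m" using 3 by (auto intro!: Sb_le)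
        ultimately show ?thesis by linarith
      qed
    qed
    have "j * (e-1) \<le> r * (e-1)" using assms(4) by simp
    then show ?thesis using key assms(1,2) by linarith
  qed
qed

end

locale ore =
  fixes R :: "'a::ring_1 set" and x y :: 'a and p e :: nat
  assumes os: "ore_setup R x y p e"
begin

abbreviation cf where "cf \<equiv> coef R x y"
abbreviation RS where "RS \<equiv> Rspan R x y"

lemma subR: "is_subring R" using os by (simp add: ore_setup_def)
lemma commx: "a \<in> R \<Longrightarrow> a * x = x * a" using os by (simp add: ore_setup_def)
lemma commy: "a \<in> R \<Longrightarrow> a * y = y * a" using os by (simp add: ore_setup_def)
lemma yx: "y * x = (x + of_nat p * x ^ e) * y" using os by (simp add: ore_setup_def)
lemma uniq: "\<exists>!c. rep R x y c s" using os by (simp add: ore_setup_def)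

lemma R0: "0 \<in> R" and R1: "1 \<in> R" using subR by (auto simp: is_subring_def)
lemma Radd: "a \<in> R \<Longrightarrow> b \<in> R \<Longrightarrow> a + b \<in> R" using subR by (auto simp: is_subring_def)
lemma Rdiff: "a \<in> R \<Longrightarrow> b \<in> R \<Longrightarrow> a - b \<in> R" using subR by (auto simp: is_subring_def)
lemma Rmult: "a \<in> R \<Longrightarrow> b \<in> R \<Longrightarrow> a * b \<in> R" using subR by (auto simp: is_subring_def)
lemma Rneg: "a \<in> R \<Longrightarrow> - a \<in> R" using Rdiff[OF R0] by simp
lemma Rnat: "of_nat k \<in> R"
  by (induction k) (auto simp: R0 R1 Radd)

lemma commxp: "a \<in> R \<Longrightarrow> a * x^n = x^n * a"
proof (induction n)
  case (Suc n)
  have "a * x^Suc n = (a * x) * x^n" by (simp add: mult.assoc)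
  also have "\<dots> = x * (a * x^n)" using commx[OF Suc.prems] by (simp add: mult.assoc)
  also have "\<dots> = x^Suc n * a" using Suc by (simp add: mult.assoc)
  finally show ?case .
qed simp
lemma commyp: "a \<in> R \<Longrightarrow> a * y^n = y^n * a"
proof (induction n)
  case (Suc n)
  have "a * y^Suc n = (a * y) * y^n" by (simp add: mult.assoc)
  also have "\<dots> = y * (a * y^n)" using commy[OF Suc.prems] by (simp add: mult.assoc)
  also have "\<dots> = y^Suc n * a" using Suc by (simp add: mult.assoc)
  finally show ?case .
qed simp
lemma commmon: "a \<in> R \<Longrightarrow> a * (x^n * y^m) = x^n * y^m * a"
  by (metis commxp commyp mult.assoc)

definition lc :: "(nat \<times> nat) set \<Rightarrow> (nat \<Rightarrow> nat \<Rightarrow> 'a) \<Rightarrow> 'a" where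
  "lc F c = (\<Sum>(n, m)\<in>F. c n m * x ^ n * y ^ m)"

lemma rep_lc:
  assumes "finite F" "\<And>n m. (n, m) \<in> F \<Longrightarrow> c n m \<in> R"
  shows "rep R x y (\<lambda>n m. if (n, m) \<in> F then c n m else 0) (lc F c)"
proof -
  let ?c = "\<lambda>n m. if (n, m) \<in> F then c n m else 0"
  have sub: "{(n, m). ?c n m \<noteq> 0} \<subseteq> F" by auto
  have "lc F c = (\<Sum>(n, m)\<in>{(n, m). ?c n m \<noteq> 0}. c n m * x ^ n * y ^ m)"
    unfolding lc_def by (rule sum.mono_neutral_right[OF assms(1) sub]) auto
  also have "\<dots> = (\<Sum>(n, m)\<in>{(n, m). ?c n m \<noteq> 0}. ?c n m * x ^ n * y ^ m)"
    by (rule sum.cong) auto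
  finally show ?thesis unfolding rep_def using assms R0 finite_subset[OF sub] by auto
qed

lemma rep_coef: "rep R x y (cf s) s"
  unfolding coef_def using uniq[of s] by (rule theI')

lemma coef_eq: "rep R x y c s \<Longrightarrow> cf s = c"
  unfolding coef_def using uniq[of s] by (rule the1_equality)

lemma coef_lc:
  assumes "finite F" "\<And>n m. (n, m) \<in> F \<Longrightarrow> c n m \<in> R"
  shows "cf (lc F c) n m = (if (n, m) \<in> F then c n m else 0)"
  using coef_eq[OF rep_lc[OF assms]] by simp

definition supp where "supp s = {(n, m). cf s n m \<noteq> 0}"

lemma finite_supp: "finite (supp s)"
  using rep_coef[of s] by (simp add: rep_def supp_def)
lemma coef_R: "cf s n m \<in> R"
  using rep_coef[of s] by (simp add: rep_def)
lemma s_lc: "s = lc (supp s) (cf s)"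
  using rep_coef[of s] by (simp add: rep_def supp_def lc_def)

lemma lc_sup: "finite F \<Longrightarrow> supp s \<subseteq> F \<Longrightarrow> lc F (cf s) = s"
proof -
  assume F: "finite F" "supp s \<subseteq> F"
  have "lc F (cf s) = lc (supp s) (cf s)" unfolding lc_def
    by (rule sum.mono_neutral_right[OF F(1) F(2)]) (auto simp: supp_def)
  then show ?thesis using s_lc[of s] by simp
qed

lemma lc_add: "lc F (\<lambda>n m. c n m + d n m) = lc F c + lc F d"
  unfolding lc_def by (simp add: sum.distrib[symmetric] case_prod_beta distrib_right)
lemma lc_neg: "lc F (\<lambda>n m. - c n m) = - lc F c"
  unfolding lc_def by (simp add: sum_negf[symmetric] case_prod_beta)
lemma lc_mult: "lc F (\<lambda>n m. a * c n m) = a * lc F c"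
  unfolding lc_def by (simp add: sum_distrib_left case_prod_beta mult.assoc)

lemma coef_add: "cf (s + t) n m = cf s n m + cf t n m"
proof -
  let ?F = "supp s \<union> supp t"
  have "s + t = lc ?F (\<lambda>n m. cf s n m + cf t n m)"
    using lc_add[of ?F "cf s" "cf t"] lc_sup[of ?F s] lc_sup[of ?F t] finite_supp by simp
  then have "cf (s + t) n m = (if (n, m) \<in> ?F then cf s n m + cf t n m else 0)"
    using coef_lc[of ?F "\<lambda>n m. cf s n m + cf t n m"] finite_supp coef_R Radd by simp
  then show ?thesis by (auto simp: supp_def)
qed

lemma coef_neg: "cf (- s) n m = - cf s n m"
proof -
  let ?F = "supp s"
  have "- s = lc ?F (\<lambda>n m. - cf s n m)"
    using lc_neg[of ?F "cf s"] lc_sup[of ?F s] finite_supp by simp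
  then have "cf (- s) n m = (if (n, m) \<in> ?F then - cf s n m else 0)"
    using coef_lc[of ?F "\<lambda>n m. - cf s n m"] finite_supp coef_R Rneg by simp
  then show ?thesis by (auto simp: supp_def)
qed

lemma coef_diff: "cf (s - t) n m = cf s n m - cf t n m"
  using coef_add[of s "- t"] coef_neg[of t] by simp

lemma coef_Rmult: "a \<in> R \<Longrightarrow> cf (a * s) n m = a * cf s n m"
proof -
  assume a: "a \<in> R"
  let ?F = "supp s"
  have "a * s = lc ?F (\<lambda>n m. a * cf s n m)"
    using lc_mult[of ?F a "cf s"] lc_sup[of ?F s] finite_supp by simp
  then have "cf (a * s) n m = (if (n, m) \<in> ?F then a * cf s n m else 0)"
    using coef_lc[of ?F "\<lambda>n m. a * cf s n m"] finite_supp coef_R Rmult a by simp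
  then show ?thesis by (auto simp: supp_def)
qed

lemma coef_0: "cf 0 n m = 0"
  using coef_diff[of 0 0] by simp

lemma coef_sum: "finite I \<Longrightarrow> cf (\<Sum>i\<in>I. f i) n m = (\<Sum>i\<in>I. cf (f i) n m)"
  by (induction I rule: finite_induct) (auto simp: coef_0 coef_add)

lemma eq0_iff: "s = 0 \<longleftrightarrow> (\<forall>n m. cf s n m = 0)"
proof
  assume "\<forall>n m. cf s n m = 0"
  then have "supp s = {}" by (simp add: supp_def)
  then show "s = 0" using s_lc[of s] by (simp add: lc_def)
qed (simp add: coef_0)

lemma coef_mon: "a \<in> R \<Longrightarrow> cf (a * x^n * y^m) n' m' = (if (n', m') = (n, m) then a else 0)"
proof -
  assume a: "a \<in> R"
  have "lc {(n, m)} (\<lambda>_ _. a) = a * x^n * y^m" by (simp add: lc_def)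
  then show ?thesis using coef_lc[of "{(n, m)}" "\<lambda>_ _. a" n' m'] a by auto
qed

lemma Rspan_iff: "s \<in> RS I \<longleftrightarrow> (\<forall>n m. cf s n m \<noteq> 0 \<longrightarrow> (n, m) \<in> I)"
proof
  assume "s \<in> RS I"
  then obtain c where "rep R x y c s" "\<forall>n m. c n m \<noteq> 0 \<longrightarrow> (n, m) \<in> I"
    unfolding Rspan_def by blast
  then show "\<forall>n m. cf s n m \<noteq> 0 \<longrightarrow> (n, m) \<in> I" using coef_eq by simp
next
  assume "\<forall>n m. cf s n m \<noteq> 0 \<longrightarrow> (n, m) \<in> I"
  then show "s \<in> RS I" unfolding Rspan_def using rep_coef by blast
qed

lemma Rspan_0: "0 \<in> RS I" by (simp add: Rspan_iff coef_0)
lemma Rspan_add: "s \<in> RS I \<Longrightarrow> t \<in> RS I \<Longrightarrow> s + t \<in> RS I"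
  unfolding Rspan_iff coef_add by (metis add.right_neutral add_0)
lemma Rspan_neg: "s \<in> RS I \<Longrightarrow> - s \<in> RS I"
  by (simp add: Rspan_iff coef_neg)
lemma Rspan_diff: "s \<in> RS I \<Longrightarrow> t \<in> RS I \<Longrightarrow> s - t \<in> RS I"
  using Rspan_add[of s I "- t"] Rspan_neg[of t I] by simp
lemma Rspan_Rmult: "a \<in> R \<Longrightarrow> s \<in> RS I \<Longrightarrow> a * s \<in> RS I"
  unfolding Rspan_iff coef_Rmult by (metis mult_zero_right)
lemma Rspan_sum: "finite A \<Longrightarrow> (\<And>i. i \<in> A \<Longrightarrow> f i \<in> RS I) \<Longrightarrow> (\<Sum>i\<in>A. f i) \<in> RS I"
  by (induction A rule: finite_induct) (auto simp: Rspan_0 Rspan_add)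
lemma Rspan_mon: "a \<in> R \<Longrightarrow> (n, m) \<in> I \<Longrightarrow> a * x^n * y^m \<in> RS I"
  by (simp add: Rspan_iff coef_mon)
lemma Rspan_mono: "I \<subseteq> J \<Longrightarrow> RS I \<subseteq> RS J"
  by (auto simp: Rspan_iff subset_iff)

lemma mon_swap: "c \<in> R \<Longrightarrow> u * x^a * y^b * (c * x^n * y^m) = u * c * (x^a * y^b * (x^n * y^m))"
proof -
  assume c: "c \<in> R"
  have "u * x^a * y^b * (c * x^n * y^m) = u * (x^a * y^b * c) * (x^n * y^m)" by (simp add: mult.assoc)
  also have "\<dots> = u * (c * (x^a*y^b)) * (x^n*y^m)" using commmon[OF c] by simp
  also have "\<dots> = u*c*(x^a*y^b*(x^n*y^m))" by (simp add: mult.assoc)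
  finally show ?thesis .
qed

lemma Rspan_mult:
  assumes s: "s \<in> RS I" and t: "t \<in> RS J"
    and h: "\<And>a b n m. (a, b) \<in> I \<Longrightarrow> (n, m) \<in> J \<Longrightarrow> x^a * y^b * (x^n * y^m) \<in> RS K"
  shows "s * t \<in> RS K"
proof -
  have "s * t = lc (supp s) (cf s) * lc (supp t) (cf t)" using s_lc[of s] s_lc[of t] by simp
  also have "\<dots> = (\<Sum>(a, b)\<in>supp s. \<Sum>(n, m)\<in>supp t.
      (cf s a b * cf t n m) * (x^a * y^b * (x^n * y^m)))"
    unfolding lc_def sum_product
    by (rule sum.cong[OF refl], clarsimp, rule sum.cong[OF refl], clarsimp)
       (rule mon_swap[OF coef_R])
  also have "\<dots> \<in> RS K"
  proof (rule Rspan_sum[OF finite_supp], clarsimp, rule Rspan_sum[OF finite_supp], clarsimp)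
    fix a b n m assume ab: "(a, b) \<in> supp s" and nm: "(n, m) \<in> supp t"
    have "(a, b) \<in> I" using ab s by (auto simp: supp_def Rspan_iff)
    moreover have "(n, m) \<in> J" using nm t by (auto simp: supp_def Rspan_iff)
    ultimately show "cf s a b * cf t n m * (x^a * y^b * (x^n * y^m)) \<in> RS K"
      using h by (intro Rspan_Rmult[OF Rmult[OF coef_R coef_R]] h)
  qed
  finally show ?thesis .
qed

lemma Rspan_subring:
  assumes "(0, 0) \<in> I" "\<And>a b n m. (a, b) \<in> I \<Longrightarrow> (n, m) \<in> I \<Longrightarrow> x^a * y^b * (x^n * y^m) \<in> RS I"
  shows "is_subring (RS I)"
proof -
  have "1 \<in> RS I" using Rspan_mon[OF R1 assms(1)] by simp
  moreover have "\<forall>a\<in>RS I. \<forall>b\<in>RS I. a + b \<in> RS I \<and> a - b \<in> RS I \<and> a * b \<in> RS I"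
    using Rspan_add Rspan_diff Rspan_mult[OF _ _ assms(2)] by simp
  ultimately show ?thesis unfolding is_subring_def using Rspan_0 by simp
qed

lemma R_sub_Rspan: "(0, 0) \<in> I \<Longrightarrow> R \<subseteq> RS I"
proof
  fix a assume "(0, 0) \<in> I" "a \<in> R"
  then show "a \<in> RS I" using Rspan_mon[of a 0 0 I] by simp
qed

end

locale ore2 = ore R x y p e for R :: "'a::ring_1 set" and x y p e +
  fixes r :: nat
  assumes e2: "e \<ge> 2" and pr0: "(of_nat (p ^ (r + 1)) :: 'a) = 0"
begin

abbreviation zz :: 'a where "zz \<equiv> of_nat p"

definition tm :: "nat \<Rightarrow> nat \<Rightarrow> nat \<Rightarrow> 'a" where
  "tm k j n = of_nat (k * p ^ j) * x ^ (n + j * (e - 1))"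

definition Pset :: "nat \<Rightarrow> nat \<Rightarrow> 'a set" where
  "Pset n J = {v. \<exists>k. v = (\<Sum>j\<le>J. tm (k j) j n)}"

lemma tm0: "tm 0 j n = 0" by (simp add: tm_def)

lemma P_0: "0 \<in> Pset n J"
  unfolding Pset_def by (rule CollectI, rule exI[of _ "\<lambda>_. 0"]) (simp add: tm0)

lemma P_add: "u \<in> Pset n J \<Longrightarrow> v \<in> Pset n J \<Longrightarrow> u + v \<in> Pset n J"
proof -
  assume "u \<in> Pset n J" "v \<in> Pset n J"
  then obtain k l where "u = (\<Sum>j\<le>J. tm (k j) j n)" "v = (\<Sum>j\<le>J. tm (l j) j n)"
    unfolding Pset_def by blast
  then have "u + v = (\<Sum>j\<le>J. tm (k j + l j) j n)"
    by (simp add: sum.distrib[symmetric] tm_def distrib_right add_mult_distrib)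
  then show ?thesis unfolding Pset_def by (intro CollectI exI[of _ "\<lambda>j. k j + l j"])
qed

lemma P_term: "j \<le> J \<Longrightarrow> tm k j n \<in> Pset n J"
proof -
  assume j: "j \<le> J"
  have "(\<Sum>i\<le>J. tm (if i = j then k else 0) i n) = (\<Sum>i\<le>J. if i = j then tm k j n else 0)"
    by (rule sum.cong) (auto simp: tm0)
  also have "\<dots> = tm k j n" using j by simp
  finally have "(\<Sum>i\<le>J. tm (if i = j then k else 0) i n) = tm k j n" .
  then show ?thesis unfolding Pset_def
    by (intro CollectI exI[of _ "\<lambda>i. if i = j then k else 0"]) simp
qed

lemma sum_map:
  assumes "finite A" "\<And>a b. f (a + b) = f a + f b" "f 0 = 0"
  shows "f (\<Sum>i\<in>A. g i) = (\<Sum>i\<in>A. f (g i))"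
  using assms(1) by (induction A rule: finite_induct) (auto simp: assms(2,3))

lemma sum_closed:
  assumes "finite A" "0 \<in> S" "\<And>a b. a \<in> S \<Longrightarrow> b \<in> S \<Longrightarrow> a + b \<in> S" "\<And>i. i \<in> A \<Longrightarrow> g i \<in> S"
  shows "(\<Sum>i\<in>A. g i) \<in> S"
  using assms(1,4) by (induction A rule: finite_induct) (auto simp: assms(2,3))

lemma P_map:
  fixes f :: "'a \<Rightarrow> 'a"
  assumes v: "v \<in> Pset n J" and f: "\<And>a b. f (a + b) = f a + f b" "f 0 = 0"
    and t: "\<And>k j. j \<le> J \<Longrightarrow> f (tm k j n) \<in> S"
    and S: "0 \<in> S" "\<And>a b. a \<in> S \<Longrightarrow> b \<in> S \<Longrightarrow> a + b \<in> S"
  shows "f v \<in> S"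
proof -
  obtain k where k: "v = (\<Sum>j\<le>J. tm (k j) j n)" using v unfolding Pset_def by blast
  have "f v = (\<Sum>j\<le>J. f (tm (k j) j n))" unfolding k by (rule sum_map) (auto simp: f)
  also have "\<dots> \<in> S" by (rule sum_closed) (auto simp: S t)
  finally show ?thesis .
qed

lemma P_mono: "v \<in> Pset n J \<Longrightarrow> J \<le> J' \<Longrightarrow> v \<in> Pset n J'"
  using P_map[of v n J id "Pset n J'"] P_term P_0 P_add by simp

lemma ofnat_comm: "of_nat k * a = a * of_nat k"
  by (rule mult_of_nat_commute)

lemma T1: "tm k j n * x^a = tm k j (n + a)"
proof -
  have h: "n + j*(e-1) + a = n + a + j*(e-1)" by simp
  show ?thesis unfolding tm_def by (simp only: mult.assoc power_add[symmetric] h)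
qed

lemma T2: "x^a * tm k j n = tm k j (n + a)"
proof -
  have h: "a + (n + j*(e-1)) = n + a + j*(e-1)" by simp
  have "x^a * tm k j n = (x^a * of_nat (k*p^j)) * x^(n + j*(e-1))" by (simp add: tm_def mult.assoc)
  also have "\<dots> = of_nat (k*p^j) * (x^a * x^(n + j*(e-1)))"
    by (subst mult_of_nat_commute[symmetric]) (simp only: mult.assoc)
  also have "\<dots> = tm k j (n + a)" unfolding tm_def by (simp only: power_add[symmetric] h)
  finally show ?thesis .
qed

lemma T3: "tm k j n * (zz * x^e) = tm k (Suc j) (Suc n)"
proof -
  have ex: "n + j * (e - 1) + e = Suc n + Suc j * (e - 1)" using e2 by simp
  have kp: "k * p^j * p = k * p^Suc j" by (simp add: mult.assoc mult.commute)
  have "tm k j n * (zz * x^e) = of_nat (k * p^j) * (x ^ (n + j * (e - 1)) * zz) * x^e"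
    by (simp add: tm_def mult.assoc)
  also have "\<dots> = of_nat (k * p^j) * (zz * x ^ (n + j * (e - 1))) * x^e"
    by (subst mult_of_nat_commute[symmetric]) (rule refl)
  also have "\<dots> = (of_nat (k * p^j) * zz) * (x ^ (n + j * (e - 1)) * x^e)"
    by (simp only: mult.assoc)
  also have "\<dots> = of_nat (k * p^Suc j) * x ^ (Suc n + Suc j * (e - 1))"
    by (simp only: of_nat_mult[symmetric] kp power_add[symmetric] ex)
  finally show ?thesis unfolding tm_def .
qed

lemma T4: "zz * tm k j (n + (e - 1)) = tm k (Suc j) n"
proof -
  have ex: "n + (e - 1) + j * (e - 1) = n + Suc j * (e - 1)" by simp
  have kp: "p * (k * p^j) = k * p^Suc j" by (simp add: mult.commute mult.left_commute)
  have "zz * tm k j (n + (e - 1)) = (zz * of_nat (k * p^j)) * x ^ (n + (e - 1) + j * (e - 1))"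
    by (simp add: tm_def mult.assoc)
  also have "\<dots> = of_nat (k * p^Suc j) * x ^ (n + Suc j * (e - 1))"
    by (simp only: of_nat_mult[symmetric] kp ex)
  finally show ?thesis unfolding tm_def .
qed

lemma T6: "of_nat (k * p^j) * tm k' i (n + j * (e - 1)) = tm (k * k') (i + j) n"
proof -
  have ex: "n + j * (e - 1) + i * (e - 1) = n + (i + j) * (e - 1)" by (simp add: add_mult_distrib)
  have kp: "k * p^j * (k' * p^i) = k * k' * p^(i + j)" by (simp add: power_add mult_ac)
  have "of_nat (k * p^j) * tm k' i (n + j * (e - 1)) = (of_nat (k * p^j) * of_nat (k' * p^i)) * x ^ (n + j * (e - 1) + i * (e - 1))"
    unfolding tm_def by (simp only: mult.assoc)
  also have "\<dots> = of_nat (k * k' * p^(i + j)) * x ^ (n + (i + j) * (e - 1))"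
    by (simp only: of_nat_mult[symmetric] kp ex)
  finally show ?thesis by (simp only: tm_def)
qed

lemma P_xr: "v \<in> Pset n J \<Longrightarrow> v * x^a \<in> Pset (n + a) J"
  using P_map[of v n J "\<lambda>v. v * x^a" "Pset (n + a) J"] P_term P_0 P_add T1
  by (simp add: distrib_right)

lemma P_xl: "v \<in> Pset n J \<Longrightarrow> x^a * v \<in> Pset (n + a) J"
  using P_map[of v n J "\<lambda>v. x^a * v" "Pset (n + a) J"] P_term P_0 P_add T2
  by (simp add: distrib_left)

lemma P_zxe: "v \<in> Pset n J \<Longrightarrow> v * (zz * x^e) \<in> Pset (Suc n) (Suc J)"
  using P_map[of v n J "\<lambda>v. v * (zz * x^e)" "Pset (Suc n) (Suc J)"] P_term P_0 P_add T3
  by (simp add: distrib_right)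

lemma P_zl: "v \<in> Pset (n + (e - 1)) J \<Longrightarrow> zz * v \<in> Pset n (Suc J)"
  using P_map[of v "n + (e - 1)" J "\<lambda>v. zz * v" "Pset n (Suc J)"] P_term P_0 P_add T4
  by (simp add: distrib_left)

lemma P_T6: "v \<in> Pset (n + j * (e - 1)) J \<Longrightarrow> of_nat (k * p^j) * v \<in> Pset n (j + J)"
  using P_map[of v "n + j * (e - 1)" J "\<lambda>v. of_nat (k * p^j) * v" "Pset n (j + J)"] P_term P_0 P_add T6
  by (simp add: distrib_left)

lemma xpow_P: "x^N \<in> Pset N J"
  using P_term[of 0 J 1 N] by (simp add: tm_def)

lemma pow_P: "(x + zz * x^e)^N \<in> Pset N N"
proof (induction N)
  case 0
  then show ?case using xpow_P[of 0 0] by simp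
next
  case (Suc N)
  have "(x + zz * x^e)^Suc N = (x + zz * x^e)^N * x + (x + zz * x^e)^N * (zz * x^e)"
    by (simp del: power_Suc add: power_Suc2 distrib_left)
  moreover have "(x + zz * x^e)^N * x \<in> Pset (Suc N) (Suc N)"
    using P_xr[OF Suc, of 1] by (auto intro: P_mono)
  moreover have "(x + zz * x^e)^N * (zz * x^e) \<in> Pset (Suc N) (Suc N)"
    using P_zxe[OF Suc] .
  ultimately show ?case by (simp add: P_add)
qed

lemma pow_D: "\<exists>v \<in> Pset (N + (e - 1)) N. (x + zz * x^e)^N = x^N + zz * v"
proof (induction N)
  case 0
  show ?case using P_0[of "0 + (e-1)" 0] by (intro bexI[of _ 0]) simp_all
next
  case (Suc N)
  then obtain v where v: "v \<in> Pset (N + (e - 1)) N" "(x + zz * x^e)^N = x^N + zz * v" by blast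
  let ?v = "x^N * x^e + v * x + v * (zz * x^e)"
  have idx: "N + (e - 1) + 1 = Suc N + (e - 1)" "Suc (N + (e - 1)) = Suc N + (e - 1)" by simp_all
  have "(x + zz * x^e)^Suc N = (x^N + zz * v) * (x + zz * x^e)"
    using v(2) by (simp del: power_Suc add: power_Suc2)
  also have "\<dots> = x^N*x + x^N*(zz*x^e) + (zz*v*x + zz*v*(zz*x^e))"
    by (simp add: distrib_left distrib_right add.assoc)
  also have "x^N * zz = zz * x^N" by (rule mult_of_nat_commute[symmetric])
  then have "x^N*(zz*x^e) = zz * (x^N * x^e)"
    by (simp only: mult.assoc[symmetric])
  also have "x^N*x + zz * (x^N * x^e) + (zz*v*x + zz*v*(zz*x^e)) = x^Suc N + zz * ?v"
    by (simp del: power_Suc add: distrib_left mult.assoc power_Suc2 add.assoc)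
  finally have eq: "(x + zz * x^e)^Suc N = x^Suc N + zz * ?v" .
  have "x^N * x^e = tm 1 0 (Suc N + (e - 1))" using e2 by (simp add: tm_def power_add[symmetric])
  then have a: "x^N * x^e \<in> Pset (Suc N + (e - 1)) (Suc N)" by (simp add: P_term)
  have "v * x^1 \<in> Pset (N + (e - 1) + 1) N" by (rule P_xr[OF v(1)])
  then have "v * x \<in> Pset (Suc N + (e - 1)) N" using idx by simp
  then have b: "v * x \<in> Pset (Suc N + (e - 1)) (Suc N)" by (rule P_mono) simp
  have c: "v * (zz * x^e) \<in> Pset (Suc N + (e - 1)) (Suc N)"
    using P_zxe[OF v(1)] idx by simp
  have "?v \<in> Pset (Suc N + (e - 1)) (Suc N)" using a b c by (intro P_add)
  then show ?case using eq by blast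
qed

lemma y_xpow: "y * x^N = (x + zz * x^e)^N * y"
proof (induction N)
  case (Suc N)
  have "y * x^Suc N = (y * x^N) * x" by (simp del: power_Suc add: power_Suc2 mult.assoc)
  also have "\<dots> = (x + zz * x^e)^N * (y * x)" using Suc by (simp add: mult.assoc)
  also have "\<dots> = (x + zz * x^e)^Suc N * y" using yx by (simp del: power_Suc add: power_Suc2 mult.assoc)
  finally show ?case .
qed simp

lemma y_ofnat: "y * of_nat k = of_nat k * y" by (simp add: ofnat_comm)

lemma P_y: "v \<in> Pset n J \<Longrightarrow> \<exists>w \<in> Pset n (n + e * J). y * v = w * y"
proof -
  assume v: "v \<in> Pset n J"
  let ?S = "{t. \<exists>w \<in> Pset n (n + e * J). t = w * y}"
  have "y * v \<in> ?S"
  proof (rule P_map[OF v, of "\<lambda>v. y * v" ?S])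
    show "0 \<in> ?S" using P_0 by force
    show "a + b \<in> ?S" if "a \<in> ?S" "b \<in> ?S" for a b
      using that P_add by (force simp: distrib_right)
    fix k j assume j: "j \<le> J"
    let ?N = "n + j * (e - 1)"
    have "y * tm k j n = of_nat (k * p^j) * (y * x^?N)"
      unfolding tm_def by (simp only: mult.assoc[symmetric] y_ofnat)
    also have "\<dots> = of_nat (k * p^j) * (x + zz * x^e)^?N * y"
      by (simp add: y_xpow mult.assoc)
    finally have eq: "y * tm k j n = of_nat (k * p^j) * (x + zz * x^e)^?N * y" .
    have "of_nat (k * p^j) * (x + zz * x^e)^?N \<in> Pset n (j + ?N)"
      using P_T6[OF pow_P] .
    moreover have "j + ?N \<le> n + e * J"
    proof -
      have "j + j * (e - 1) = j * e" using e2 by (simp add: algebra_simps)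
      moreover have "j * e \<le> e * J" using j by simp
      ultimately show ?thesis by simp
    qed
    ultimately show "y * tm k j n \<in> ?S" using eq P_mono by blast
  qed (auto simp: distrib_left)
  then show ?thesis by blast
qed

lemma yb_xn: "\<exists>w \<in> Pset n (n * Sig e b). y^b * x^n = w * y^b"
proof (induction b)
  case 0
  then show ?case using xpow_P[of n 0] by auto
next
  case (Suc b)
  then obtain w where w: "w \<in> Pset n (n * Sig e b)" "y^b * x^n = w * y^b" by blast
  obtain w' where w': "w' \<in> Pset n (n + e * (n * Sig e b))" "y * w = w' * y" using P_y[OF w(1)] by blast
  have "y^Suc b * x^n = y * (y^b * x^n)" by (simp add: mult.assoc)
  also have "\<dots> = (y * w) * y^b" using w(2) by (simp add: mult.assoc)
  also have "\<dots> = w' * y^Suc b" using w'(2) by (simp add: mult.assoc)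
  finally have "y^Suc b * x^n = w' * y^Suc b" .
  moreover have "n + e * (n * Sig e b) = n * Sig e (Suc b)" by (simp add: Sig_Suc' algebra_simps)
  ultimately show ?case using w' by auto
qed

lemma ofnat_R: "of_nat k \<in> R" by (rule Rnat)

lemma ofnat_big0: "j > r \<Longrightarrow> (of_nat (k * p^j) :: 'a) = 0"
proof -
  assume "j > r"
  then have "j = (j - (r+1)) + (r+1)" by simp
  then have "p^j = p^(j - (r+1)) * p^(r+1)" by (metis power_add)
  then have "k * p^j = k * p^(j - (r+1)) * p^(r+1)" by (simp add: mult.assoc)
  then have "(of_nat (k * p^j) :: 'a) = of_nat (k * p^(j - (r+1))) * of_nat (p^(r+1))"
    by (simp only: of_nat_mult[symmetric])
  then show ?thesis using pr0 by simp
qed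

lemma P_ymon:
  assumes v: "v \<in> Pset n J" and K: "\<And>j. j \<le> J \<Longrightarrow> j \<le> r \<Longrightarrow> (n + j * (e - 1), M) \<in> K"
  shows "v * y^M \<in> RS K"
proof (rule P_map[OF v, of "\<lambda>v. v * y^M" "RS K"])
  fix k j assume j: "j \<le> J"
  show "tm k j n * y^M \<in> RS K"
  proof (cases "j \<le> r")
    case True
    then show ?thesis unfolding tm_def using K[OF j True] by (intro Rspan_mon ofnat_R)
  next
    case False
    then show ?thesis using ofnat_big0[of j k] by (simp add: tm_def Rspan_0)
  qed
qed (auto simp: distrib_right Rspan_0 Rspan_add)

lemma mon_mult:
  assumes "\<And>j. j \<le> n * Sig e b \<Longrightarrow> j \<le> r \<Longrightarrow> (a + n + j * (e - 1), b + m) \<in> K"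
  shows "x^a * y^b * (x^n * y^m) \<in> RS K"
proof -
  obtain w where w: "w \<in> Pset n (n * Sig e b)" "y^b * x^n = w * y^b" using yb_xn by blast
  have "x^a * y^b * (x^n * y^m) = x^a * (y^b * x^n) * y^m" by (simp add: mult.assoc)
  also have "\<dots> = (x^a * w) * (y^b * y^m)" using w(2) by (simp add: mult.assoc)
  also have "\<dots> = (x^a * w) * y^(b + m)" by (simp add: power_add)
  finally have "x^a * y^b * (x^n * y^m) = (x^a * w) * y^(b + m)" .
  moreover have "x^a * w \<in> Pset (n + a) (n * Sig e b)" by (rule P_xl[OF w(1)])
  ultimately show ?thesis using P_ymon[of "x^a * w" "n + a" "n * Sig e b" "b + m" K] assms
    by (simp add: add.commute)
qed

end

context ore2
begin

abbreviation al where "al \<equiv> alpha R x y p e"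
definition Bd :: "nat \<Rightarrow> 'a set" where "Bd d = RS {(n, k). k = 0 \<and> d dvd n}"

lemma Rx_Bd: "Rx R x y = Bd 1"
  unfolding Rx_def Bd_def by (rule arg_cong[where f = RS]) auto

definition s0 where "s0 s = {n. cf s n 0 \<noteq> 0}"

lemma finite_s0: "finite (s0 s)"
proof -
  have "s0 s \<subseteq> fst ` supp s" by (force simp: s0_def supp_def)
  then show ?thesis using finite_supp by (meson finite_imageI finite_subset)
qed

lemma Bd_coef: "s \<in> Bd d \<Longrightarrow> cf s n m \<noteq> 0 \<Longrightarrow> m = 0 \<and> d dvd n"
  unfolding Bd_def Rspan_iff by blast

lemma Bd_sum: "s \<in> Bd d \<Longrightarrow> s = (\<Sum>n\<in>s0 s. cf s n 0 * x^n)"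
proof -
  assume s: "s \<in> Bd d"
  have sp: "supp s = (\<lambda>n. (n, 0)) ` s0 s"
    using Bd_coef[OF s] by (auto simp: supp_def s0_def image_iff)
  have "s = lc (supp s) (cf s)" by (rule s_lc)
  also have "\<dots> = (\<Sum>n\<in>s0 s. cf s n 0 * x^n)"
    unfolding lc_def sp by (subst sum.reindex) (auto simp: inj_on_def)
  finally show ?thesis .
qed

lemma al_def': "al s = (\<Sum>n\<in>s0 s. cf s n 0 * (x + zz * x^e)^n)"
  by (simp add: alpha_def s0_def)

lemma Bd_subring: "d \<ge> 1 \<Longrightarrow> is_subring (Bd d)"
  unfolding Bd_def
proof (rule Rspan_subring)
  fix a b n m :: nat assume "(a, b) \<in> {(n, k). k = 0 \<and> d dvd n}" "(n, m) \<in> {(n, k). k = 0 \<and> d dvd n}"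
  then show "x^a * y^b * (x^n * y^m) \<in> RS {(n, k). k = 0 \<and> d dvd n}"
    using Rspan_mon[OF R1, of "a+n" 0 "{(n, k). k = 0 \<and> d dvd n}"] by (simp add: power_add)
qed simp

lemma P_Bd: "v \<in> Pset n J \<Longrightarrow> d dvd n \<Longrightarrow> d dvd (e - 1) \<Longrightarrow> v \<in> Bd d"
  using P_ymon[of v n J 0 "{(n, k). k = 0 \<and> d dvd n}"] unfolding Bd_def by simp

lemma al_Bd: "s \<in> Bd d \<Longrightarrow> d dvd (e - 1) \<Longrightarrow> al s \<in> Bd d"
proof -
  assume s: "s \<in> Bd d" and d: "d dvd (e - 1)"
  show ?thesis unfolding al_def' Bd_def
  proof (rule Rspan_sum[OF finite_s0], rule Rspan_Rmult[OF coef_R])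
    fix n assume "n \<in> s0 s"
    then have "d dvd n" using Bd_coef[OF s] by (auto simp: s0_def)
    then show "(x + zz * x^e)^n \<in> RS {(n, k). k = 0 \<and> d dvd n}"
      using P_Bd[OF pow_P _ d] unfolding Bd_def by simp
  qed
qed

lemma al_y: "s \<in> Bd d \<Longrightarrow> al s * y = y * s"
proof -
  assume s: "s \<in> Bd d"
  have "y * s = (\<Sum>n\<in>s0 s. y * (cf s n 0 * x^n))" by (subst Bd_sum[OF s]) (simp add: sum_distrib_left)
  also have "\<dots> = (\<Sum>n\<in>s0 s. cf s n 0 * (x + zz * x^e)^n * y)"
  proof (rule sum.cong[OF refl])
    fix n
    have "y * (cf s n 0 * x^n) = (y * cf s n 0) * x^n" by (simp add: mult.assoc)
    also have "\<dots> = cf s n 0 * (y * x^n)" by (simp add: commy[OF coef_R, symmetric] mult.assoc)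
    also have "\<dots> = cf s n 0 * (x + zz * x^e)^n * y" by (simp add: y_xpow mult.assoc)
    finally show "y * (cf s n 0 * x^n) = cf s n 0 * (x + zz * x^e)^n * y" .
  qed
  also have "\<dots> = al s * y" by (simp add: al_def' sum_distrib_right)
  finally show ?thesis by simp
qed

lemma coef_my: "cf (t * y) n (Suc m) = cf t n m" "cf (t * y) n 0 = 0"
proof -
  let ?g = "\<lambda>(n, m). (n, Suc m)"
  let ?c = "\<lambda>n m. cf t n (m - 1)"
  have inj: "inj_on ?g (supp t)" by (auto simp: inj_on_def)
  have "t * y = (\<Sum>(n, m)\<in>supp t. cf t n m * x^n * y^Suc m)"
    by (subst s_lc[of t]) (simp add: lc_def sum_distrib_right case_prod_beta mult.assoc power_Suc2 del: power_Suc)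
  also have "\<dots> = lc (?g ` supp t) ?c"
    unfolding lc_def by (subst sum.reindex[OF inj]) (auto simp: case_prod_beta intro!: sum.cong)
  finally have eq: "t * y = lc (?g ` supp t) ?c" .
  have fin: "finite (?g ` supp t)" using finite_supp by simp
  have cR: "\<And>n m. (n, m) \<in> ?g ` supp t \<Longrightarrow> ?c n m \<in> R" using coef_R by simp
  show "cf (t * y) n (Suc m) = cf t n m"
    using coef_lc[OF fin cR, where n=n and m="Suc m"] unfolding eq by (auto simp: supp_def image_iff)
  show "cf (t * y) n 0 = 0"
    using coef_lc[OF fin cR, where n=n and m=0] unfolding eq by auto
qed

lemma coef_xm: "cf (x * t) (Suc n) m = cf t n m" "cf (x * t) 0 m = 0"
proof -
  let ?g = "\<lambda>(n, m). (Suc n, m)"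
  let ?c = "\<lambda>n m. cf t (n - 1) m"
  have inj: "inj_on ?g (supp t)" by (auto simp: inj_on_def)
  have "x * t = (\<Sum>(n, m)\<in>supp t. cf t n m * x^Suc n * y^m)"
    by (subst s_lc[of t]) (simp add: lc_def sum_distrib_left case_prod_beta mult.assoc[symmetric] commx[OF coef_R])
  also have "\<dots> = lc (?g ` supp t) ?c"
    unfolding lc_def by (subst sum.reindex[OF inj]) (auto simp: case_prod_beta intro!: sum.cong)
  finally have eq: "x * t = lc (?g ` supp t) ?c" .
  have fin: "finite (?g ` supp t)" using finite_supp by simp
  have cR: "\<And>n m. (n, m) \<in> ?g ` supp t \<Longrightarrow> ?c n m \<in> R" using coef_R by simp
  show "cf (x * t) (Suc n) m = cf t n m"
    using coef_lc[OF fin cR, where n="Suc n" and m=m] unfolding eq by (auto simp: supp_def image_iff)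
  show "cf (x * t) 0 m = 0"
    using coef_lc[OF fin cR, where n=0 and m=m] unfolding eq by auto
qed

lemma ry: "t * y = 0 \<Longrightarrow> t = 0"
  using coef_my(1) by (metis eq0_iff coef_0)

lemma ryp: "t * y^k = 0 \<Longrightarrow> t = 0"
proof (induction k arbitrary: t)
  case (Suc k)
  have "(t * y^k) * y = 0" using Suc.prems by (simp add: mult.assoc power_Suc2 del: power_Suc)
  then show ?case using ry Suc.IH by blast
qed simp

lemma lx: "x * t = 0 \<Longrightarrow> t = 0"
  using coef_xm(1) by (metis eq0_iff coef_0)

lemma lxp: "x^k * t = 0 \<Longrightarrow> t = 0"
proof (induction k arbitrary: t)
  case (Suc k)
  have "x * (x^k * t) = 0" using Suc.prems by (simp add: mult.assoc)
  then show ?case using lx Suc.IH by blast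
qed simp

end

context ore2
begin

lemma Bd_sub1: "Bd d \<subseteq> Bd 1"
  unfolding Bd_def by (rule Rspan_mono) auto

lemma Bd_0: "0 \<in> Bd d" unfolding Bd_def by (rule Rspan_0)
lemma Bd_add: "s \<in> Bd d \<Longrightarrow> t \<in> Bd d \<Longrightarrow> s + t \<in> Bd d" unfolding Bd_def by (rule Rspan_add)
lemma Bd_neg: "s \<in> Bd d \<Longrightarrow> - s \<in> Bd d" unfolding Bd_def by (rule Rspan_neg)
lemma Bd_diff: "s \<in> Bd d \<Longrightarrow> t \<in> Bd d \<Longrightarrow> s - t \<in> Bd d" unfolding Bd_def by (rule Rspan_diff)
lemma Bd_Rmult: "c \<in> R \<Longrightarrow> s \<in> Bd d \<Longrightarrow> c * s \<in> Bd d" unfolding Bd_def by (rule Rspan_Rmult)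
lemma Bd_mult: "d \<ge> 1 \<Longrightarrow> s \<in> Bd d \<Longrightarrow> t \<in> Bd d \<Longrightarrow> s * t \<in> Bd d"
  using Bd_subring[of d] unfolding is_subring_def by blast
lemma Bd_1: "d \<ge> 1 \<Longrightarrow> 1 \<in> Bd d"
  using Bd_subring[of d] unfolding is_subring_def by blast
lemma R_Bd: "c \<in> R \<Longrightarrow> c \<in> Bd d"
  using R_sub_Rspan[of "{(n, k). k = 0 \<and> d dvd n}"] unfolding Bd_def by auto

lemma al_unique: "u \<in> Bd 1 \<Longrightarrow> s \<in> Bd 1 \<Longrightarrow> u * y = y * s \<Longrightarrow> u = al s"
proof -
  assume u: "u \<in> Bd 1" and s: "s \<in> Bd 1" and eq: "u * y = y * s"
  have "(u - al s) * y = 0" using eq al_y[OF s] by (simp add: left_diff_distrib)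
  then show ?thesis using ry[OF \<open>(u - al s) * y = 0\<close>] by simp
qed

lemma al_in1: "s \<in> Bd 1 \<Longrightarrow> al s \<in> Bd 1" using al_Bd[of s 1] by simp

lemma al_add: assumes s: "s \<in> Bd 1" and t: "t \<in> Bd 1" shows "al (s + t) = al s + al t"
proof (rule al_unique[symmetric])
  show "al s + al t \<in> Bd 1" by (rule Bd_add[OF al_in1[OF s] al_in1[OF t]])
  show "s + t \<in> Bd 1" by (rule Bd_add[OF s t])
  show "(al s + al t) * y = y * (s + t)" using al_y[OF s] al_y[OF t] by (simp add: distrib_left distrib_right)
qed
lemma al_neg: assumes s: "s \<in> Bd 1" shows "al (- s) = - al s"
proof (rule al_unique[symmetric])
  show "- al s \<in> Bd 1" by (rule Bd_neg[OF al_in1[OF s]])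
  show "- s \<in> Bd 1" by (rule Bd_neg[OF s])
  show "(- al s) * y = y * (- s)" using al_y[OF s] by simp
qed
lemma al_diff: assumes s: "s \<in> Bd 1" and t: "t \<in> Bd 1" shows "al (s - t) = al s - al t"
proof (rule al_unique[symmetric])
  show "al s - al t \<in> Bd 1" by (rule Bd_diff[OF al_in1[OF s] al_in1[OF t]])
  show "s - t \<in> Bd 1" by (rule Bd_diff[OF s t])
  show "(al s - al t) * y = y * (s - t)" using al_y[OF s] al_y[OF t] by (simp add: left_diff_distrib right_diff_distrib)
qed
lemma al_mult: "s \<in> Bd 1 \<Longrightarrow> t \<in> Bd 1 \<Longrightarrow> al (s * t) = al s * al t"
proof (rule al_unique[symmetric])
  assume s: "s \<in> Bd 1" and t: "t \<in> Bd 1"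
  show "al s * al t \<in> Bd 1" using s t by (intro Bd_mult al_in1) auto
  show "s * t \<in> Bd 1" using s t by (intro Bd_mult) auto
  have "al s * al t * y = al s * (y * t)" using al_y[OF t] by (simp add: mult.assoc)
  also have "\<dots> = y * (s * t)" using al_y[OF s] by (simp add: mult.assoc[symmetric])
  finally show "al s * al t * y = y * (s * t)" .
qed
lemma al_R: "c \<in> R \<Longrightarrow> al c = c"
  by (rule al_unique[symmetric]) (auto intro: R_Bd simp: commy)
lemma al_1: "al 1 = 1" using al_R[OF R1] .
lemma al_0: "al 0 = 0" using al_R[OF R0] .
lemma al_Rmult: "c \<in> R \<Longrightarrow> s \<in> Bd 1 \<Longrightarrow> al (c * s) = c * al s"
  using al_mult[OF R_Bd] al_R by simp

lemma zz_pow: "zz ^ k = of_nat (p ^ k)" by simp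
lemma zz_pow_R: "zz ^ k \<in> R" using Rnat[of "p^k"] by simp
lemma zz_R: "zz \<in> R" using Rnat[of p] by simp
lemma zz_big: "zz ^ (r + 1) = 0" using pr0 by simp

definition Dm where "Dm s = al s - s"

context
  fixes d :: nat assumes d1: "d \<ge> 1" and dd: "d dvd (e - 1)"
begin

lemma Bd1: "s \<in> Bd d \<Longrightarrow> s \<in> Bd 1" using Bd_sub1 by blast

lemma D_lemma: "s \<in> Bd d \<Longrightarrow> \<exists>t \<in> Bd d. Dm s = zz * t"
proof -
  assume s: "s \<in> Bd d"
  have "\<forall>n. \<exists>v. v \<in> Pset (n + (e - 1)) n \<and> (x + zz * x^e)^n = x^n + zz * v"
    using pow_D by blast
  then obtain V where V: "\<And>n. V n \<in> Pset (n + (e - 1)) n" "\<And>n. (x + zz * x^e)^n = x^n + zz * V n"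
    by metis
  let ?t = "\<Sum>n\<in>s0 s. cf s n 0 * V n"
  have "Dm s = (\<Sum>n\<in>s0 s. cf s n 0 * (x + zz * x^e)^n) - (\<Sum>n\<in>s0 s. cf s n 0 * x^n)"
    unfolding Dm_def al_def' using Bd_sum[OF s] by simp
  also have "\<dots> = (\<Sum>n\<in>s0 s. cf s n 0 * (zz * V n))"
    by (simp add: sum_subtractf[symmetric] V(2) distrib_left)
  also have "\<dots> = (\<Sum>n\<in>s0 s. zz * (cf s n 0 * V n))"
  proof (rule sum.cong[OF refl])
    fix n
    have "cf s n 0 * zz = zz * cf s n 0" by (rule mult_of_nat_commute[symmetric])
    then show "cf s n 0 * (zz * V n) = zz * (cf s n 0 * V n)" by (simp only: mult.assoc[symmetric])
  qed
  also have "\<dots> = zz * ?t" by (simp add: sum_distrib_left)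
  finally have eq: "Dm s = zz * ?t" .
  have "?t \<in> Bd d"
    unfolding Bd_def
  proof (rule Rspan_sum[OF finite_s0], rule Rspan_Rmult[OF coef_R])
    fix n assume "n \<in> s0 s"
    then have "d dvd n" using Bd_coef[OF s] by (auto simp: s0_def)
    then have "d dvd n + (e - 1)" using dd by simp
    then show "V n \<in> RS {(n, k). k = 0 \<and> d dvd n}" using P_Bd[OF V(1) _ dd] unfolding Bd_def by simp
  qed
  then show ?thesis using eq by blast
qed

lemma Dm_Bd: "s \<in> Bd d \<Longrightarrow> Dm s \<in> Bd d"
  unfolding Dm_def using al_Bd[OF _ dd] Bd_diff by blast

lemma D_pow: "s \<in> Bd d \<Longrightarrow> \<exists>t \<in> Bd d. (Dm ^^ k) s = zz^k * t"
proof (induction k)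
  case 0
  then show ?case by auto
next
  case (Suc k)
  then obtain t where t: "t \<in> Bd d" "(Dm ^^ k) s = zz^k * t" by blast
  obtain t' where t': "t' \<in> Bd d" "Dm t = zz * t'" using D_lemma[OF t(1)] by blast
  have "(Dm ^^ Suc k) s = Dm (zz^k * t)" using t(2) by simp
  also have "\<dots> = zz^k * Dm t"
    unfolding Dm_def using al_Rmult[OF zz_pow_R Bd1[OF t(1)]] by (simp add: right_diff_distrib)
  also have "\<dots> = zz^Suc k * t'" using t'(2) by (simp add: mult.assoc power_Suc2 del: power_Suc)
  finally show ?case using t' by blast
qed

lemma al_inj: "inj_on al (Bd d)"
proof (rule inj_onI)
  fix s s' assume s: "s \<in> Bd d" and s': "s' \<in> Bd d" and eq: "al s = al s'"
  let ?t = "s - s'"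
  have t: "?t \<in> Bd d" using s s' Bd_diff by blast
  have alt: "al ?t = 0" using al_diff[OF Bd1[OF s] Bd1[OF s']] eq by simp
  have alnt: "al (- ?t) = 0" using al_neg[OF Bd1[OF t]] alt by simp
  have "(Dm ^^ k) ?t = ?t \<or> (Dm ^^ k) ?t = - ?t" for k
  proof (induction k)
    case (Suc k)
    then show ?case using alt alnt by (auto simp: Dm_def)
  qed simp
  moreover obtain t' where "(Dm ^^ (r+1)) ?t = zz^(r+1) * t'" using D_pow[OF t] by blast
  ultimately have "?t = 0 \<or> - ?t = 0" using zz_big by (metis mult_zero_left)
  then show "s = s'" by auto
qed

lemma al_surj_aux: "t \<in> Bd d \<Longrightarrow> \<exists>t' \<in> Bd d. al t' = zz^(r + 1 - j) * t"
proof (induction j arbitrary: t)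
  case 0
  then show ?case using zz_big al_0 Bd_0 by auto
next
  case (Suc j)
  show ?case
  proof (cases "j \<le> r")
    case False
    then have "r + 1 - Suc j = r + 1 - j" by simp
    then show ?thesis using Suc by simp
  next
    case True
    define k where "k = r - j"
    have kk: "r + 1 - Suc j = k" "r + 1 - j = Suc k" using True by (auto simp: k_def)
    obtain w where w: "w \<in> Bd d" "Dm t = zz * w" using D_lemma[OF Suc.prems] by blast
    obtain w' where w': "w' \<in> Bd d" "al w' = zz^Suc k * w" using Suc.IH[OF w(1)] kk by auto
    have u: "zz^k * t \<in> Bd d" using Bd_Rmult[OF zz_pow_R Suc.prems] .
    have "al (zz^k * t - w') = zz^k * al t - zz^Suc k * w"
      using al_diff[OF Bd1[OF u] Bd1[OF w'(1)]] al_Rmult[OF zz_pow_R Bd1[OF Suc.prems]] w'(2) by simp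
    also have "al t = t + zz * w" using w(2) unfolding Dm_def by (simp add: algebra_simps)
    also have "zz^k * (t + zz * w) - zz^Suc k * w = zz^k * t"
      by (simp add: distrib_left mult.assoc power_Suc2 del: power_Suc)
    finally show ?thesis unfolding kk using Bd_diff[OF u w'(1)] by blast
  qed
qed

lemma al_surj: "t \<in> Bd d \<Longrightarrow> \<exists>t' \<in> Bd d. al t' = t"
  using al_surj_aux[of t "r + 1"] by simp

lemma al_bij: "bij_betw al (Bd d) (Bd d)"
  unfolding bij_betw_def using al_inj al_Bd[OF _ dd] al_surj by blast

lemma alm_Bd: "s \<in> Bd d \<Longrightarrow> (al ^^ m) s \<in> Bd d"
  by (induction m) (auto intro: al_Bd[OF _ dd])

lemma alm_bij: "bij_betw (al ^^ m) (Bd d) (Bd d)"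
proof (induction m)
  case 0
  then show ?case by (simp add: bij_betw_def inj_on_def)
next
  case (Suc m)
  have "al ^^ Suc m = al \<circ> (al ^^ m)" by simp
  then show ?case using bij_betw_trans[OF Suc al_bij] by metis
qed

lemma alm_hom: "s \<in> Bd d \<Longrightarrow> t \<in> Bd d \<Longrightarrow>
   (al ^^ m) (s + t) = (al ^^ m) s + (al ^^ m) t \<and> (al ^^ m) (s * t) = (al ^^ m) s * (al ^^ m) t"
proof (induction m)
  case (Suc m)
  have a: "(al ^^ m) s \<in> Bd 1" "(al ^^ m) t \<in> Bd 1" using alm_Bd Suc.prems Bd1 by auto
  show ?case using Suc al_add[OF a] al_mult[OF a] by simp
qed simp

lemma alm_1: "(al ^^ m) 1 = 1"
  by (induction m) (simp_all add: al_1)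

lemma ring_aut_alm: "ring_aut (Bd d) (al ^^ m)"
  unfolding ring_aut_def using alm_bij alm_1 alm_hom by blast

end

lemma ym_q: "q \<in> Bd 1 \<Longrightarrow> y^m * q = (al ^^ m) q * y^m"
proof (induction m)
  case (Suc m)
  have b: "(al ^^ m) q \<in> Bd 1" using alm_Bd[of 1 q m] Suc.prems by simp
  have "y^Suc m * q = y * (y^m * q)" by (simp add: mult.assoc)
  also have "\<dots> = (y * (al ^^ m) q) * y^m" using Suc by (simp add: mult.assoc)
  also have "\<dots> = (al ^^ Suc m) q * y^Suc m" using al_y[OF b] by (simp add: mult.assoc[symmetric])
  finally show ?case .
qed simp

end

context ore2
begin

definition proj :: "nat \<Rightarrow> 'a \<Rightarrow> 'a" where
  "proj m t = lc {(n, 0) | n. cf t n m \<noteq> 0} (\<lambda>n _. cf t n m)"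

definition Ms where "Ms t = snd ` supp t"

lemma proj_coef: "cf (proj m t) n k = (if k = 0 then cf t n m else 0)"
proof -
  have fin: "finite {(n, 0::nat) | n. cf t n m \<noteq> 0}"
  proof -
    have "{(n, 0::nat) | n. cf t n m \<noteq> 0} = (\<lambda>n. (n, 0)) ` {n. (n, m) \<in> supp t}" by (auto simp: supp_def)
    moreover have "finite {n. (n, m) \<in> supp t}"
      using finite_vimageI[OF finite_supp, of "\<lambda>n. (n, m)"] by (simp add: vimage_def inj_on_def)
    ultimately show ?thesis by simp
  qed
  have "cf (proj m t) n k = (if (n, k) \<in> {(n, 0::nat) | n. cf t n m \<noteq> 0} then cf t n m else 0)"
    unfolding proj_def by (rule coef_lc[OF fin]) (simp add: coef_R)
  moreover have "((n, k) \<in> {(n, 0::nat) | n. cf t n m \<noteq> 0}) = (k = 0 \<and> cf t n m \<noteq> 0)" by blast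
  ultimately show ?thesis by simp
qed

lemma proj_coef0: "cf (proj m t) n 0 = cf t n m" by (simp add: proj_coef)

lemma proj_Bd: "proj m t \<in> Bd 1"
  unfolding Bd_def Rspan_iff proj_coef by auto

lemma coef_qy: "q \<in> Bd 1 \<Longrightarrow> cf (q * y^m) n k = (if k = m then cf q n 0 else 0)"
proof (induction m arbitrary: k)
  case 0
  then show ?case using Bd_coef[OF 0] by auto
next
  case (Suc m)
  have eq: "q * y^Suc m = (q * y^m) * y" by (simp add: mult.assoc power_Suc2 del: power_Suc)
  show ?case
  proof (cases k)
    case 0
    then show ?thesis unfolding eq using coef_my(2) by simp
  next
    case (Suc k')
    have "cf (q * y^Suc m) n k = cf (q * y^m) n k'" unfolding eq Suc by (rule coef_my(1))
    also have "\<dots> = (if k' = m then cf q n 0 else 0)" by (rule Suc.IH[OF Suc.prems])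
    finally show ?thesis using Suc by simp
  qed
qed

lemma finite_Ms: "finite (Ms t)" unfolding Ms_def using finite_supp by simp

lemma decomp: "t = (\<Sum>m\<in>Ms t. proj m t * y^m)"
proof -
  have "\<forall>n k. cf (t - (\<Sum>m\<in>Ms t. proj m t * y^m)) n k = 0"
  proof (intro allI)
    fix n k
    have "cf (\<Sum>m\<in>Ms t. proj m t * y^m) n k = (\<Sum>m\<in>Ms t. if k = m then cf (proj m t) n 0 else 0)"
      by (simp add: coef_sum[OF finite_Ms] coef_qy[OF proj_Bd])
    also have "\<dots> = (\<Sum>m\<in>Ms t. if k = m then cf t n m else 0)"
      by (rule sum.cong[OF refl]) (simp add: proj_coef0)
    also have "\<dots> = cf t n k"
    proof (cases "k \<in> Ms t")
      case True
      then show ?thesis by (simp add: finite_Ms)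
    next
      case False
      then have "cf t n k = 0" by (force simp: Ms_def supp_def)
      then show ?thesis using False by (auto intro!: sum.neutral)
    qed
    finally show "cf (t - (\<Sum>m\<in>Ms t. proj m t * y^m)) n k = 0" by (simp add: coef_diff)
  qed
  then have "t - (\<Sum>m\<in>Ms t. proj m t * y^m) = 0" by (subst eq0_iff)
  then show ?thesis by simp
qed

lemma graded_zero:
  assumes M: "finite M" and f: "inj_on f M" and u: "\<And>m. m \<in> M \<Longrightarrow> u m \<in> Bd 1"
    and z: "(\<Sum>m\<in>M. u m * y^(f m)) = 0" and m0: "m0 \<in> M"
  shows "u m0 = 0"
proof -
  have "\<forall>n k. cf (u m0) n k = 0"
  proof (intro allI)
    fix n k
    show "cf (u m0) n k = 0"
    proof (cases "k = 0")
      case False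
      then show ?thesis using Bd_coef[OF u[OF m0]] by blast
    next
      case True
      have "0 = cf (\<Sum>m\<in>M. u m * y^(f m)) n (f m0)" using z coef_0 by simp
      also have "\<dots> = (\<Sum>m\<in>M. if f m0 = f m then cf (u m) n 0 else 0)"
        using coef_sum[OF M] coef_qy u by simp
      also have "\<dots> = (\<Sum>m\<in>M. if m = m0 then cf (u m) n 0 else 0)"
        by (rule sum.cong[OF refl]) (use f m0 in \<open>auto simp: inj_on_def\<close>)
      also have "\<dots> = cf (u m0) n 0" using M m0 by simp
      finally show ?thesis using True by simp
    qed
  qed
  then show ?thesis by (subst eq0_iff)
qed

lemma Ms_ne: "m \<in> Ms t \<Longrightarrow> proj m t \<noteq> 0"
proof -
  assume "m \<in> Ms t"
  then obtain n where "cf t n m \<noteq> 0" by (auto simp: Ms_def supp_def)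
  then have "cf (proj m t) n 0 \<noteq> 0" by (simp add: proj_coef)
  then show ?thesis using coef_0 by auto
qed

lemma Ms_empty: "Ms t = {} \<Longrightarrow> t = 0"
  using decomp[of t] by simp

lemma al_inj1: "al s = al s' \<Longrightarrow> s \<in> Bd 1 \<Longrightarrow> s' \<in> Bd 1 \<Longrightarrow> s = s'"
  using al_inj[of 1] by (auto simp: inj_on_def)

lemma ly: "y * t = 0 \<Longrightarrow> t = 0"
proof -
  assume z: "y * t = 0"
  have "y * t = (\<Sum>m\<in>Ms t. y * (proj m t * y^m))" by (subst decomp[of t]) (simp add: sum_distrib_left)
  also have "\<dots> = (\<Sum>m\<in>Ms t. al (proj m t) * y^(Suc m))"
    by (rule sum.cong[OF refl]) (simp add: mult.assoc[symmetric] al_y[OF proj_Bd])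
  finally have "(\<Sum>m\<in>Ms t. al (proj m t) * y^(Suc m)) = 0" using z by simp
  note sum0 = this
  have "\<forall>m\<in>Ms t. proj m t = 0"
  proof
    fix m assume m: "m \<in> Ms t"
    have "al (proj m t) = 0"
      by (rule graded_zero[OF finite_Ms, where f=Suc and u="\<lambda>m. al (proj m t)", OF _ al_in1[OF proj_Bd] sum0 m]) simp
    then have "al (proj m t) = al 0" using al_0 by simp
    then show "proj m t = 0" by (rule al_inj1[OF _ proj_Bd Bd_0])
  qed
  then have "Ms t = {}" using Ms_ne by blast
  then show ?thesis by (rule Ms_empty)
qed

lemma lyp: "y^k * t = 0 \<Longrightarrow> t = 0"
proof (induction k arbitrary: t)
  case (Suc k)
  have "y^k * (y * t) = 0" using Suc.prems by (simp add: mult.assoc[symmetric] power_Suc2 del: power_Suc)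
  then show ?case using ly Suc.IH by blast
qed simp

lemma x_Bd: "x \<in> Bd 1"
  using Rspan_mon[OF R1, of 1 0 "{(n, k). k = 0 \<and> 1 dvd n}"] unfolding Bd_def by simp

lemma Bd_xcomm: "q \<in> Bd 1 \<Longrightarrow> q * x = x * q"
proof -
  assume q: "q \<in> Bd 1"
  have "q * x = (\<Sum>n\<in>s0 q. cf q n 0 * x^n * x)" by (subst Bd_sum[OF q]) (simp add: sum_distrib_right)
  also have "\<dots> = (\<Sum>n\<in>s0 q. x * (cf q n 0 * x^n))"
  proof (rule sum.cong[OF refl])
    fix n
    have "cf q n 0 * x^n * x = cf q n 0 * (x^n * x)" by (simp only: mult.assoc)
    also have "\<dots> = cf q n 0 * (x * x^n)" by (simp only: power_commutes)
    also have "\<dots> = (cf q n 0 * x) * x^n" by (simp only: mult.assoc)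
    finally have "cf q n 0 * x^n * x = (cf q n 0 * x) * x^n" .
    also have "\<dots> = x * (cf q n 0 * x^n)" by (simp add: commx[OF coef_R] mult.assoc)
    finally show "cf q n 0 * x^n * x = x * (cf q n 0 * x^n)" .
  qed
  also have "\<dots> = x * q" by (subst (2) Bd_sum[OF q]) (simp add: sum_distrib_left)
  finally show ?thesis .
qed

lemma alm_0: "(al ^^ m) 0 = 0"
  by (induction m) (simp_all add: al_0)

lemma rx: "t * x = 0 \<Longrightarrow> t = 0"
proof -
  assume z: "t * x = 0"
  have "t * x = (\<Sum>m\<in>Ms t. proj m t * (y^m * x))" by (subst decomp[of t]) (simp add: sum_distrib_right mult.assoc)
  also have "\<dots> = (\<Sum>m\<in>Ms t. (proj m t * (al ^^ m) x) * y^m)"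
    by (rule sum.cong[OF refl]) (simp add: ym_q[OF x_Bd] mult.assoc)
  finally have "(\<Sum>m\<in>Ms t. (proj m t * (al ^^ m) x) * y^(id m)) = 0" using z by simp
  note sum0 = this
  have uin: "proj m t * (al ^^ m) x \<in> Bd 1" for m
  proof -
    have "(al^^m) x \<in> Bd 1" using alm_Bd[of 1 x m] x_Bd by simp
    then show ?thesis using Bd_mult[of 1 "proj m t"] proj_Bd by simp
  qed
  have h: "\<forall>m\<in>Ms t. proj m t * (al ^^ m) x = 0"
  proof
    fix m assume m: "m \<in> Ms t"
    show "proj m t * (al ^^ m) x = 0"
      by (rule graded_zero[OF finite_Ms, where f=id and u="\<lambda>m. proj m t * (al ^^ m) x", OF _ uin sum0 m]) simp
  qed
  have "\<forall>m\<in>Ms t. proj m t = 0"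
  proof
    fix m assume m: "m \<in> Ms t"
    have bij: "bij_betw (al ^^ m) (Bd 1) (Bd 1)" using alm_bij[of 1 m] by simp
    have "proj m t \<in> (al ^^ m) ` Bd 1" using bij proj_Bd[of m t] unfolding bij_betw_def by simp
    then obtain q where q: "q \<in> Bd 1" "(al ^^ m) q = proj m t" by (rule imageE) simp
    have qx: "q * x \<in> Bd 1" using Bd_mult[OF _ q(1) x_Bd] by simp
    have "(al ^^ m) (q * x) = (al ^^ m) q * (al ^^ m) x"
      using alm_hom[of 1 q x m] q(1) x_Bd by simp
    also have "\<dots> = 0" using q(2) h m by simp
    also have "\<dots> = (al ^^ m) 0" using alm_0 by simp
    finally have eq: "(al ^^ m) (q * x) = (al ^^ m) 0" .
    have inj: "inj_on (al ^^ m) (Bd 1)" using bij unfolding bij_betw_def by simp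
    have "q * x = 0" by (rule inj_onD[OF inj eq qx Bd_0])
    then have "x * q = 0" using Bd_xcomm[OF q(1)] by simp
    then have "q = 0" by (rule lx)
    then show "proj m t = 0" using q(2) alm_0 by simp
  qed
  then have "Ms t = {}" using Ms_ne by blast
  then show ?thesis by (rule Ms_empty)
qed

lemma rxp: "t * x^k = 0 \<Longrightarrow> t = 0"
proof (induction k arbitrary: t)
  case (Suc k)
  have "(t * x^k) * x = 0" using Suc.prems by (simp add: mult.assoc power_Suc2 del: power_Suc)
  then show ?case using rx Suc.IH by blast
qed simp

lemma right_reg: "t * (x^N * y^k) = 0 \<Longrightarrow> t = 0"
  using ryp[of "t * x^N" k] rxp[of t N] by (simp add: mult.assoc)

lemma left_reg: "x^N * y^k * z = 0 \<Longrightarrow> z = 0"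
  using lxp[of N "y^k * z"] lyp[of k z] by (simp add: mult.assoc)

end

context ore2
begin

lemma xk_comm: "q \<in> Bd 1 \<Longrightarrow> q * x^k = x^k * q"
proof (induction k)
  case (Suc k)
  have "q * x^Suc k = (q * x^k) * x" by (simp add: mult.assoc power_Suc2 del: power_Suc)
  also have "\<dots> = x^k * (q * x)" using Suc by (simp add: mult.assoc)
  also have "\<dots> = x^Suc k * q" using Bd_xcomm[OF Suc.prems] by (simp add: mult.assoc power_Suc2 del: power_Suc)
  finally show ?case .
qed simp

lemma xpow_Bd: "d dvd k \<Longrightarrow> x^k \<in> Bd d"
  using Rspan_mon[OF R1, of k 0 "{(n, k). k = 0 \<and> d dvd n}"] unfolding Bd_def by simp

context
  fixes c d :: nat
  assumes c1: "c \<ge> 1" and d1: "d \<ge> 1" and dd: "d dvd (e - 1)" and r2: "r \<ge> 2"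
    and one0: "(1::'a) \<noteq> 0"
begin

abbreviation "TT \<equiv> Tset c d e r"
abbreviation "TL \<equiv> Ttilde c d"

lemma intdd: "int d dvd int (e - 1)" using dd by simp

lemma Tset_closed:
  assumes ab: "(a, b) \<in> TT" and nm: "(n, m) \<in> TT"
  shows "x^a * y^b * (x^n * y^m) \<in> RS TT"
proof (rule mon_mult)
  fix j assume j1: "j \<le> n * Sig e b" and j2: "j \<le> r"
  have h: "c * b \<le> a" "d dvd (a - c * b)" "a \<le> Sigbar c e r b"
          "c * m \<le> n" "d dvd (n - c * m)" "n \<le> Sigbar c e r m"
    using ab nm by (auto simp: Tset_def)
  have "a + n + j * (e - 1) - c * (b + m) = (a - c * b) + (n - c * m) + j * (e - 1)"
    using h(1,4) by (simp add: algebra_simps)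
  moreover have "d dvd (a - c * b) + (n - c * m) + j * (e - 1)"
    using h(2,5) dd by (intro dvd_add dvd_mult) auto
  moreover have "c * (b + m) \<le> a + n + j * (e - 1)" using h(1,4) by (simp add: algebra_simps)
  moreover have "a + n + j * (e - 1) \<le> Sigbar c e r (b + m)"
    using main_ineq[OF c1 e2 h(3) h(6) j1 j2] .
  ultimately show "(a + n + j * (e - 1), b + m) \<in> TT" unfolding Tset_def by simp
qed

lemma Ttilde_closed:
  assumes ab: "(a, b) \<in> TL" and nm: "(n, m) \<in> TL"
  shows "x^a * y^b * (x^n * y^m) \<in> RS TL"
proof (rule mon_mult)
  fix j
  have h: "int d dvd int a - int c * int b" "int d dvd int n - int c * int m"
    using ab nm by (auto simp: Ttilde_def)
  have eq1: "int (a + n + j * (e - 1)) - int c * int (b + m) =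
        (int a - int c * int b) + (int n - int c * int m) + int j * int (e - 1)"
    by (simp only: of_nat_add of_nat_mult) (simp add: algebra_simps)
  have dv1: "int d dvd (int a - int c * int b) + (int n - int c * int m) + int j * int (e - 1)"
    using h intdd by (intro dvd_add dvd_mult) auto
  have "int d dvd int (a + n + j * (e - 1)) - int c * int (b + m)" by (subst eq1) (rule dv1)
  then show "(a + n + j * (e - 1), b + m) \<in> TL" unfolding Ttilde_def by (simp only: mem_Collect_eq case_prod_conv)
qed

lemma Tset_sub: "TT \<subseteq> TL"
proof
  fix nm assume "nm \<in> TT"
  then obtain n m where nm: "nm = (n, m)" "c * m \<le> n" "d dvd (n - c * m)" by (auto simp: Tset_def)
  then have "int (n - c * m) = int n - int c * int m" by simp
  moreover have "int d dvd int (n - c * m)" using nm(3) by simp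
  ultimately show "nm \<in> TL" unfolding Ttilde_def nm by simp
qed

lemma A_subring: "is_subring (RS TT)"
proof (rule Rspan_subring)
  show "(0, 0) \<in> TT" by (simp add: Tset_def Sb_0[OF c1 e2])
next
  fix a b n m :: nat assume "(a, b) \<in> TT" "(n, m) \<in> TT"
  then show "x^a * y^b * (x^n * y^m) \<in> RS TT" by (rule Tset_closed)
qed

lemma At_subring: "is_subring (RS TL)"
proof (rule Rspan_subring)
  show "(0, 0) \<in> TL" by (simp add: Ttilde_def)
next
  fix a b n m :: nat assume "(a, b) \<in> TL" "(n, m) \<in> TL"
  then show "x^a * y^b * (x^n * y^m) \<in> RS TL" by (rule Ttilde_closed)
qed

lemma key_elem:
  "\<exists>N k. (N, k) \<in> TT \<and> (\<forall>n m. (n, m) \<in> TL \<longrightarrow> n \<le> Bn \<longrightarrow> m \<le> Bn \<longrightarrow>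
      x^N * y^k * (x^n * y^m) \<in> RS TT)"
proof -
  define mu' where "mu' = mu c e r"
  define L where "L = c + r * (e - 1)"
  define K where "K = d * c * Bn + Bn + r * (e - 1) + 1"
  define k where "k = mu' + K"
  define N where "N = c * k + d * c * Bn"
  have re1: "r * (e - 1) \<ge> 1" using r2 e2 by simp
  have KK: "K \<le> K * (r * (e - 1))" using re1 by simp
  have Sgm: "mu' \<le> Sig e mu'" using Sig_ge[of e mu'] e2 by simp
  have cSgm: "c * mu' \<le> c * Sig e mu'" using Sgm by simp
  have Sbk: "Sigbar c e r (k + m) = c * Sig e mu' + (K + m) * L" for m
    using Sb_ge[OF c1 e2, where r=r and m="k + m"] unfolding mu'_def[symmetric] L_def k_def by simp
  have Nk: "(N, k) \<in> TT"
  proof -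
    have "N \<le> Sigbar c e r k"
    proof -
      have "Sigbar c e r k = c * Sig e mu' + K * L" using Sbk[of 0] by simp
      moreover have "K * L = c * K + K * (r * (e - 1))" unfolding L_def by (simp add: algebra_simps)
      moreover have "N = c * mu' + c * K + d * c * Bn" unfolding N_def k_def by (simp add: algebra_simps)
      moreover have "d * c * Bn \<le> K" unfolding K_def by simp
      ultimately show ?thesis using KK cSgm by linarith
    qed
    then show ?thesis unfolding Tset_def N_def by simp
  qed
  have prod: "x^N * y^k * (x^n * y^m) \<in> RS TT" if nm: "(n, m) \<in> TL" "n \<le> Bn" "m \<le> Bn" for n m
  proof (rule mon_mult)
    fix j assume j2: "j \<le> r"
    have "c * m \<le> c * Bn" using nm(3) by simp
    moreover have "1 * (c * Bn) \<le> d * (c * Bn)" using d1 by (rule mult_le_mono1)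
    ultimately have cm: "c * m \<le> d * c * Bn" unfolding mult.assoc by linarith
    have "c * (k + m) = c * k + c * m" by (simp add: algebra_simps)
    then have low: "c * (k + m) \<le> N + n + j * (e - 1)" unfolding N_def using cm by linarith
    have "int (N + n + j * (e - 1) - c * (k + m)) = int (N + n + j * (e - 1)) - int (c * (k + m))"
      using low by (rule of_nat_diff)
    also have "\<dots> = int (d * c * Bn) - int c * int m + int n + int j * int (e - 1)"
      unfolding N_def by (simp only: of_nat_add of_nat_mult) (simp add: algebra_simps)
    finally have "int (N + n + j * (e - 1) - c * (k + m)) = int (d * c * Bn) - int c * int m + int n + int j * int (e - 1)" .
    moreover have "int d dvd int (d * c * Bn) - int c * int m + int n + int j * int (e - 1)"
    proof -
      have "int d dvd int n - int c * int m" using nm(1) by (simp add: Ttilde_def)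
      moreover have "int d dvd int (d * c * Bn)" by simp
      ultimately have H: "int d dvd int (d * c * Bn) + (int n - int c * int m)" by (rule dvd_add[rotated])
      have H2: "int d dvd (int (d * c * Bn) + (int n - int c * int m)) + int j * int (e - 1)"
        by (rule dvd_add[OF H dvd_mult[OF intdd]])
      have eq: "int (d * c * Bn) - int c * int m + int n + int j * int (e - 1) =
          (int (d * c * Bn) + (int n - int c * int m)) + int j * int (e - 1)" by (simp add: algebra_simps)
      show ?thesis unfolding eq by (rule H2)
    qed
    ultimately have dv: "d dvd (N + n + j * (e - 1) - c * (k + m))"
      by (metis int_dvd_int_iff)
    have up: "N + n + j * (e - 1) \<le> Sigbar c e r (k + m)"
    proof -
      have "j * (e - 1) \<le> r * (e - 1)" using j2 by simp
      moreover have "N = c * mu' + c * K + d * c * Bn" unfolding N_def k_def by (simp add: algebra_simps)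
      moreover have "(K + m) * L \<ge> c * K + K * (r * (e - 1))"
      proof -
        have "\<And>R'. c * K + K * R' \<le> (K + m) * (c + R')" by (simp add: algebra_simps)
        then show ?thesis unfolding L_def by blast
      qed
      moreover have "d * c * Bn + n + r * (e - 1) < K" unfolding K_def using nm(2) by simp
      ultimately show ?thesis using Sbk[of m] KK cSgm by linarith
    qed
    show "(N + n + j * (e - 1), k + m) \<in> TT" unfolding Tset_def using low dv up by simp
  qed
  show ?thesis using Nk prod by blast
qed


lemma bounded_span:
  assumes "finite E" "E \<subseteq> RS TL"
  shows "\<exists>Bn. \<forall>z\<in>E. z \<in> RS (TL \<inter> {(n, m). n \<le> Bn \<and> m \<le> Bn})"
proof -
  define S where "S = \<Union> (supp ` E)"
  have finS: "finite S" unfolding S_def using assms(1) finite_supp by simp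
  define Bn where "Bn = Max (insert 0 (fst ` S \<union> snd ` S))"
  have fin2: "finite (insert 0 (fst ` S \<union> snd ` S))" using finS by simp
  have "z \<in> RS (TL \<inter> {(n, m). n \<le> Bn \<and> m \<le> Bn})" if z: "z \<in> E" for z
    unfolding Rspan_iff
  proof (intro allI impI)
    fix n m assume nz: "cf z n m \<noteq> 0"
    then have nmS: "(n, m) \<in> S" unfolding S_def supp_def using z by blast
    have "n \<le> Bn" unfolding Bn_def using fin2 nmS by (intro Max_ge) (auto simp: image_iff, force)
    moreover have "m \<le> Bn" unfolding Bn_def using fin2 nmS by (intro Max_ge) (auto simp: image_iff, force)
    moreover have "z \<in> RS TL" using z assms(2) by blast
    then have "(n, m) \<in> TL" using nz unfolding Rspan_iff by blast
    ultimately show "(n, m) \<in> TL \<inter> {(n, m). n \<le> Bn \<and> m \<le> Bn}" by simp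
  qed
  then show ?thesis by blast
qed

lemma key_mult:
  assumes "(N, k) \<in> TT" and h: "\<forall>n m. (n, m) \<in> TL \<longrightarrow> n \<le> Bn \<longrightarrow> m \<le> Bn \<longrightarrow>
      x^N * y^k * (x^n * y^m) \<in> RS TT"
    and z: "z \<in> RS (TL \<inter> {(n, m). n \<le> Bn \<and> m \<le> Bn})"
  shows "x^N * y^k * z \<in> RS TT"
proof (rule Rspan_mult[of _ "{(N, k)}"])
  show "x^N * y^k \<in> RS {(N, k)}" using Rspan_mon[OF R1, of N k "{(N, k)}"] by simp
  show "z \<in> RS (TL \<inter> {(n, m). n \<le> Bn \<and> m \<le> Bn})" by (rule z)
  fix a b n m assume "(a, b) \<in> {(N, k)}" "(n, m) \<in> TL \<inter> {(n, m). n \<le> Bn \<and> m \<le> Bn}"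
  then show "x^a * y^b * (x^n * y^m) \<in> RS TT" using h by auto
qed

lemma essential: "strongly_nicely_essential (RS TT) (RS TL)"
  unfolding strongly_nicely_essential_def nicely_essential_def
proof (intro conjI allI impI ballI)
  fix E assume E: "finite E" "E \<subseteq> RS TL - {0}"
  obtain Bn where Bn: "\<forall>z\<in>E. z \<in> RS (TL \<inter> {(n, m). n \<le> Bn \<and> m \<le> Bn})"
    using bounded_span[OF E(1)] E(2) by blast
  obtain N k where Nk: "(N, k) \<in> TT" and h: "\<forall>n m. (n, m) \<in> TL \<longrightarrow> n \<le> Bn \<longrightarrow> m \<le> Bn \<longrightarrow>
      x^N * y^k * (x^n * y^m) \<in> RS TT" using key_elem by blast
  have a: "x^N * y^k \<in> RS TT" using Rspan_mon[OF R1 Nk] by simp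
  have "\<forall>z\<in>E. x^N * y^k * z \<noteq> 0 \<and> x^N * y^k * z \<in> RS TT"
  proof
    fix z assume z: "z \<in> E"
    have "z \<noteq> 0" using z E(2) by blast
    then have "x^N * y^k * z \<noteq> 0" using left_reg by blast
    moreover have "x^N * y^k * z \<in> RS TT" using key_mult[OF Nk h] Bn z by blast
    ultimately show "x^N * y^k * z \<noteq> 0 \<and> x^N * y^k * z \<in> RS TT" by blast
  qed
  then show "\<exists>a\<in>RS TT. \<forall>z\<in>E. a * z \<noteq> 0 \<and> a * z \<in> RS TT" using a by blast
next
  fix z assume z: "z \<in> RS TL"
  obtain Bn where Bn: "\<forall>z'\<in>{z}. z' \<in> RS (TL \<inter> {(n, m). n \<le> Bn \<and> m \<le> Bn})"
    using bounded_span[of "{z}"] z by blast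
  obtain N k where Nk: "(N, k) \<in> TT" and h: "\<forall>n m. (n, m) \<in> TL \<longrightarrow> n \<le> Bn \<longrightarrow> m \<le> Bn \<longrightarrow>
      x^N * y^k * (x^n * y^m) \<in> RS TT" using key_elem by blast
  have a: "x^N * y^k \<in> RS TT" using Rspan_mon[OF R1 Nk] by simp
  have ann: "{a \<in> RS TT. a * (x^N * y^k) = 0} = {0}"
    using right_reg Rspan_0 by auto
  have "x^N * y^k * z \<in> RS TT" using key_mult[OF Nk h] Bn by blast
  then show "\<exists>c\<in>RS TT. {a \<in> RS TT. a * c = 0} = {0} \<and> c * z \<in> RS TT" using a ann by blast
qed

lemma cf_mon1: "cf (x^n * y^m) n' m' = (if (n', m') = (n, m) then 1 else 0)"
  using coef_mon[OF R1, of n m n' m'] by simp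

lemma deg_mon: "deg_y R x y (x^n * y^m) = m"
proof -
  have "{m'. \<exists>n'. cf (x^n * y^m) n' m' \<noteq> 0} = {m}" using one0 by (auto simp: cf_mon1)
  then show ?thesis unfolding deg_y_def by simp
qed

lemma mon_ne0: "x^n * y^m \<noteq> 0"
  using cf_mon1[of n m n m] one0 coef_0 by auto

lemma mon_TL: "x^(c*m) * y^m \<in> RS TL"
  using Rspan_mon[OF R1, of "c*m" m TL] by (simp add: Ttilde_def)

lemma Deg_TL: "Deg_y R x y (RS TL) = UNIV"
proof -
  have "m \<in> Deg_y R x y (RS TL)" for m
    unfolding Deg_y_def using mon_TL[of m] mon_ne0[of "c*m" m] deg_mon[of "c*m" m] by force
  then show ?thesis by blast
qed

lemma d_of_TL: "d_of R x y (RS TL) = 1"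
proof -
  have "\<not> RS TL \<subseteq> Rx R x y"
  proof
    assume "RS TL \<subseteq> Rx R x y"
    then have "x^(c*1) * y^1 \<in> Rx R x y" using mon_TL[of 1] by blast
    then have "cf (x^(c*1) * y^1) (c*1) 1 = 0" unfolding Rx_def Rspan_iff by auto
    then show False using cf_mon1[of "c*1" 1 "c*1" 1] one0 by simp
  qed
  moreover have "Gcd (Deg_y R x y (RS TL) - {0}) = 1"
  proof -
    have "Gcd (Deg_y R x y (RS TL) - {0}) dvd 1" using Deg_TL by (intro Gcd_dvd) auto
    then show ?thesis by simp
  qed
  ultimately show ?thesis unfolding d_of_def by simp
qed

lemma Bd_TL: "Bd d \<subseteq> RS TL"
  unfolding Bd_def by (rule Rspan_mono) (auto simp: Ttilde_def)

lemma reg_xpow: "regular_in (Rx R x y) (x^k)"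
  unfolding regular_in_def Rx_Bd
proof (intro conjI ballI impI)
  show "x^k \<in> Bd 1" by (rule xpow_Bd) simp
  fix s assume "s \<in> Bd 1"
  show "s = 0" if "x^k * s = 0" using that by (rule lxp)
  show "s = 0" if "s * x^k = 0" using that by (rule rxp)
qed

lemma decomp_TL: "RS TL = {\<Sum>m\<in>F. g m | F g. finite F \<and> (\<forall>m\<in>F. g m \<in> RS TL \<and> (\<exists>q\<in>Rx R x y. g m = q * y ^ m))}"
proof (intro equalityI subsetI)
  fix s assume s: "s \<in> RS TL"
  have gin: "proj m s * y^m \<in> RS TL" for m
    unfolding Rspan_iff
  proof (intro allI impI)
    fix n k assume "cf (proj m s * y^m) n k \<noteq> 0"
    then have "k = m" "cf s n m \<noteq> 0" using coef_qy[OF proj_Bd] proj_coef0 by (auto split: if_splits)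
    then show "(n, k) \<in> TL" using s unfolding Rspan_iff by blast
  qed
  have "s = (\<Sum>m\<in>Ms s. proj m s * y^m)" by (rule decomp)
  moreover have "\<forall>m\<in>Ms s. proj m s * y^m \<in> RS TL \<and> (\<exists>q\<in>Rx R x y. proj m s * y^m = q * y ^ m)"
    using gin proj_Bd Rx_Bd by blast
  ultimately show "s \<in> {\<Sum>m\<in>F. g m | F g. finite F \<and> (\<forall>m\<in>F. g m \<in> RS TL \<and> (\<exists>q\<in>Rx R x y. g m = q * y ^ m))}"
    using finite_Ms by blast
next
  fix s assume "s \<in> {\<Sum>m\<in>F. g m | F g. finite F \<and> (\<forall>m\<in>F. g m \<in> RS TL \<and> (\<exists>q\<in>Rx R x y. g m = q * y ^ m))}"
  then obtain F :: "nat set" and g where "s = (\<Sum>m\<in>F. g m)" "finite F" "\<forall>m\<in>F. g m \<in> RS TL" by (simp only: mem_Collect_eq) blast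
  then show "s \<in> RS TL" using Rspan_sum by blast
qed

lemma twist: "q \<in> Bd d \<Longrightarrow> x^(c*m) * y^m * q - (al ^^ m) q * (x^(c*m) * y^m) = 0"
proof -
  assume "q \<in> Bd d"
  then have q: "q \<in> Bd 1" using Bd_sub1 by blast
  have aq: "(al ^^ m) q \<in> Bd 1" using alm_Bd[of 1 q m] q by simp
  have "x^(c*m) * y^m * q = x^(c*m) * (y^m * q)" by (simp only: mult.assoc)
  also have "\<dots> = x^(c*m) * ((al ^^ m) q * y^m)" using ym_q[OF q] by simp
  also have "\<dots> = (x^(c*m) * (al ^^ m) q) * y^m" by (simp only: mult.assoc)
  also have "\<dots> = ((al ^^ m) q * x^(c*m)) * y^m" using xk_comm[OF aq, of "c*m"] by simp
  also have "\<dots> = (al ^^ m) q * (x^(c*m) * y^m)" by (simp only: mult.assoc)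
  finally show ?thesis by simp
qed

lemma absorb:
  assumes q: "q \<in> Rx R x y" and qy: "q * y^m \<in> RS TL"
  shows "\<exists>u\<in>Bd d. regular_in (Rx R x y) u \<and> u * q * y^m \<in> {b * (x^(c*m) * y^m) | b. b \<in> Bd d}"
proof -
  have q1: "q \<in> Bd 1" using q Rx_Bd by simp
  define u where "u = x^(d*(c*m))"
  define b where "b = (\<Sum>n\<in>s0 q. cf q n 0 * x^(n + d*(c*m) - c*m))"
  have cm: "c*m \<le> d*(c*m)" using mult_le_mono1[OF d1, of "c*m"] by simp
  have u: "u \<in> Bd d" unfolding u_def by (rule xpow_Bd) simp
  have b: "b \<in> Bd d" unfolding b_def Bd_def
  proof (rule Rspan_sum[OF finite_s0], rule Rspan_Rmult[OF coef_R])
    fix n assume "n \<in> s0 q"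
    then have "cf (q * y^m) n m \<noteq> 0" using coef_qy[OF q1] by (simp add: s0_def)
    then have "(n, m) \<in> TL" using qy unfolding Rspan_iff by blast
    then have h: "int d dvd int n - int c * int m" by (simp add: Ttilde_def)
    have le: "c*m \<le> n + d*(c*m)" using cm by linarith
    have "int (n + d*(c*m) - c*m) = int (n + d*(c*m)) - int (c*m)" by (rule of_nat_diff[OF le])
    also have "\<dots> = (int n - int c * int m) + int d * (int c * int m)"
      by (simp add: algebra_simps)
    finally have "int (n + d*(c*m) - c*m) = (int n - int c * int m) + int d * (int c * int m)" .
    moreover have "int d dvd (int n - int c * int m) + int d * (int c * int m)" using h by simp
    ultimately have "d dvd (n + d*(c*m) - c*m)" by (metis int_dvd_int_iff)
    then have "x^(n + d*(c*m) - c*m) \<in> Bd d" by (rule xpow_Bd)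
    then show "x^(n + d*(c*m) - c*m) \<in> RS {(n, k). k = 0 \<and> d dvd n}" unfolding Bd_def .
  qed
  have "u * q = (\<Sum>n\<in>s0 q. u * (cf q n 0 * x^n))" by (subst Bd_sum[OF q1]) (simp add: sum_distrib_left)
  also have "\<dots> = (\<Sum>n\<in>s0 q. cf q n 0 * x^(n + d*(c*m)))"
  proof (rule sum.cong[OF refl])
    fix n
    have comm: "x^(d*(c*m)) * cf q n 0 = cf q n 0 * x^(d*(c*m))" by (rule commxp[OF coef_R, symmetric])
    have "u * (cf q n 0 * x^n) = (u * cf q n 0) * x^n" by (simp add: mult.assoc)
    also have "\<dots> = cf q n 0 * (u * x^n)" unfolding u_def using comm by (simp only: mult.assoc[symmetric])
    also have "\<dots> = cf q n 0 * x^(n + d*(c*m))" unfolding u_def by (simp add: power_add[symmetric] add.commute)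
    finally show "u * (cf q n 0 * x^n) = cf q n 0 * x^(n + d*(c*m))" .
  qed
  also have "\<dots> = b * x^(c*m)" unfolding b_def sum_distrib_right
  proof (rule sum.cong[OF refl])
    fix n
    have "n + d*(c*m) = (n + d*(c*m) - c*m) + c*m" using cm by linarith
    then show "cf q n 0 * x^(n + d*(c*m)) = cf q n 0 * x^(n + d*(c*m) - c*m) * x^(c*m)"
      by (metis mult.assoc power_add)
  qed
  finally have "u * q * y^m = b * (x^(c*m) * y^m)" by (simp add: mult.assoc)
  moreover have "regular_in (Rx R x y) u" unfolding u_def by (rule reg_xpow)
  ultimately show ?thesis using u b by blast
qed

lemma special: "special_with R x y (RS TL) (\<lambda>m. x ^ (c * m))
      (\<lambda>m. RS {(n, k). k = 0 \<and> d dvd n}) (\<lambda>m. alpha R x y p e ^^ m)"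
  unfolding special_with_def Bd_def[symmetric]
proof (intro conjI)
  show "is_subring (RS TL)" by (rule At_subring)
  show "R \<subseteq> RS TL" by (rule R_sub_Rspan) (simp add: Ttilde_def)
  show "RS TL = {\<Sum>m\<in>F. g m | F g. finite F \<and> (\<forall>m\<in>F. g m \<in> RS TL \<and> (\<exists>q\<in>Rx R x y. g m = q * y ^ m))}"
    by (rule decomp_TL)
  show "Deg_y R x y (RS TL) = {d_of R x y (RS TL) * k | k. True}"
    unfolding d_of_TL Deg_TL by simp
  show "\<forall>m\<in>Deg_y R x y (RS TL). m \<noteq> 0 \<longrightarrow>
        x ^ (c * m) * y ^ m \<in> RS TL \<and> regular_in (Rx R x y) (x ^ (c * m)) \<and>
        is_subring (Bd d) \<and> R \<subseteq> Bd d \<and> Bd d \<subseteq> RS TL \<inter> Rx R x y \<and> ring_aut (Bd d) (al ^^ m) \<and>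
        (\<forall>q\<in>Bd d. let f = x ^ (c * m) * y ^ m * q - (al ^^ m) q * (x ^ (c * m) * y ^ m)
                  in f = 0 \<or> deg_y R x y f < m) \<and>
        (\<forall>q\<in>Rx R x y. q * y ^ m \<in> RS TL \<longrightarrow>
           (\<exists>u\<in>Bd d. regular_in (Rx R x y) u \<and>
              u * q * y ^ m \<in> {b * (x ^ (c * m) * y ^ m) | b. b \<in> Bd d}))"
  proof (intro ballI impI)
    fix m assume "m \<in> Deg_y R x y (RS TL)" "m \<noteq> 0"
    have t1: "\<forall>q\<in>Bd d. let f = x ^ (c * m) * y ^ m * q - (al ^^ m) q * (x ^ (c * m) * y ^ m)
                  in f = 0 \<or> deg_y R x y f < m"
      using twist by (simp add: Let_def)
    have t2: "\<forall>q\<in>Rx R x y. q * y ^ m \<in> RS TL \<longrightarrow>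
           (\<exists>u\<in>Bd d. regular_in (Rx R x y) u \<and>
              u * q * y ^ m \<in> {b * (x ^ (c * m) * y ^ m) | b. b \<in> Bd d})"
      using absorb by blast
    have t3: "Bd d \<subseteq> RS TL \<inter> Rx R x y" using Bd_TL Bd_sub1 Rx_Bd by blast
    have t4: "R \<subseteq> Bd d" using R_Bd by blast
    show "x ^ (c * m) * y ^ m \<in> RS TL \<and> regular_in (Rx R x y) (x ^ (c * m)) \<and>
        is_subring (Bd d) \<and> R \<subseteq> Bd d \<and> Bd d \<subseteq> RS TL \<inter> Rx R x y \<and> ring_aut (Bd d) (al ^^ m) \<and>
        (\<forall>q\<in>Bd d. let f = x ^ (c * m) * y ^ m * q - (al ^^ m) q * (x ^ (c * m) * y ^ m)
                  in f = 0 \<or> deg_y R x y f < m) \<and>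
        (\<forall>q\<in>Rx R x y. q * y ^ m \<in> RS TL \<longrightarrow>
           (\<exists>u\<in>Bd d. regular_in (Rx R x y) u \<and>
              u * q * y ^ m \<in> {b * (x ^ (c * m) * y ^ m) | b. b \<in> Bd d}))"
      using mon_TL reg_xpow Bd_subring[OF d1] t4 t3 ring_aut_alm[OF d1 dd] t1 t2 by blast
  qed
qed

lemma all_main: "is_subring (RS TT) \<and> is_subring (RS TL) \<and> RS TT \<subseteq> RS TL \<and>
    strongly_nicely_essential (RS TT) (RS TL) \<and>
    special_with R x y (RS TL) (\<lambda>m. x ^ (c * m))
      (\<lambda>m. RS {(n, k). k = 0 \<and> d dvd n}) (\<lambda>m. alpha R x y p e ^^ m) \<and>
    special_subext R x y (RS TL)"
  using A_subring At_subring Rspan_mono[OF Tset_sub] essential special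
  unfolding special_subext_def by blast

end
end

theorem mainTheorem20:
  fixes R :: "'a::ring_1 set" and x y :: 'a and p e r c d :: nat
  assumes "prime p" and "e \<ge> 2" and "r \<ge> 2" and "c \<ge> 1" and "d \<ge> 1" and "d dvd (e - 1)"
    and "CHAR('a) = p ^ (r + 1)"
    and "ore_setup R x y p e"
  shows "is_subring (Rspan R x y (Tset c d e r)) \<and> is_subring (Rspan R x y (Ttilde c d)) \<and>
    Rspan R x y (Tset c d e r) \<subseteq> Rspan R x y (Ttilde c d) \<and>
    strongly_nicely_essential (Rspan R x y (Tset c d e r)) (Rspan R x y (Ttilde c d)) \<and>
    special_with R x y (Rspan R x y (Ttilde c d)) (\<lambda>m. x ^ (c * m))
      (\<lambda>m. Rspan R x y {(n, k). k = 0 \<and> d dvd n}) (\<lambda>m. alpha R x y p e ^^ m) \<and>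
    special_subext R x y (Rspan R x y (Ttilde c d))"
proof -
  have p2: "p \<ge> 2" using assms(1) by (rule prime_ge_2_nat)
  have pr0: "(of_nat (p ^ (r + 1)) :: 'a) = 0" using assms(7) of_nat_CHAR[where 'a='a] by simp
  have one0: "(1::'a) \<noteq> 0"
  proof
    assume "(1::'a) = 0"
    then have "(of_nat 1 :: 'a) = 0" by simp
    then have "CHAR('a) dvd 1" by (simp only: of_nat_eq_0_iff_char_dvd)
    then have "p ^ (r + 1) = 1" using assms(7) by simp
    moreover have "p ^ (r + 1) \<ge> 2 ^ (r + 1)" using p2 by (rule power_mono) simp
    moreover have "(2::nat) ^ (r + 1) \<ge> 2" using one_le_power[of "2::nat" r] by simp
    ultimately show False by linarith
  qed
  have "ore2 R x y p e r" unfolding ore2_def ore2_axioms_def ore_def using assms(2,8) pr0 by blast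
  then interpret ore2 R x y p e r .
  show ?thesis using all_main[OF assms(4) assms(5) assms(6) assms(3) one0] by simp
qed

end
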